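(* Let $\nu\in(0,1)$, $h>0$, $T>0$ and $q>\frac{1}{\nu}$, and let $n$ be the integer with $nh\le T<(n+1)h$. Let $L(\cdot),\vartheta(\cdot),\xi(\cdot)$ be nonnegative functions with $\vartheta(t)=0$ and $L(t)=0$ for $t<0$, where $L(\cdot)\in L^{q}(0,T)$ and $\vartheta(\cdot),\xi(\cdot)\in L^{\frac{q}{q-1}}[-h,T)$. Assume \[ \xi(t)\leq \vartheta(t)+\int_{0}^{t}\frac{L(s)\xi(s)}{(t-s)^{1-\nu}}ds+\int_{0}^{t}\frac{L(s)\xi(s-h)}{(t-s)^{1-\nu}}ds \quad \text{for a.e. } t\in[0,T], \] and $\xi(t)=0$ for $t<0$. Then there is a constant $K>0$ such that \[ \xi(t)\leq\vartheta_{n}(t)+K\int_{0}^{t}\frac{L(s)\vartheta(s)}{(t-s)^{1-\nu}}ds \quad\text{for a.e. } t\in [0,T], \] where \[ \vartheta_{n}(t)=\vartheta(t)+K\sum_{k=1}^{n}\int_{0}^{t-kh}\frac{L(s)\vartheta(s)}{(t-kh-s)^{1-\nu}}ds+K\sum_{k=0}^{n-1}\int_{h}^{t-kh}\frac{L(s)\vartheta(s-h)}{(t-kh-s)^{1-\nu}}ds . \]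
   Context: Integrals $\int_a^b$ with $b<a$ are understood to be zero (equivalently, the integrands vanish there since $\vartheta$ and $L$ vanish on negative arguments). *)

theory Defs
  imports "HOL-Analysis.Analysis"
begin

text \<open>Weakly singular integral  int_a^b f(s) / (c - s)^(1-nu) ds  of a nonnegative integrand,
  taken as a nonnegative (extended-real) Lebesgue integral; it is 0 when b < a.\<close>
definition sing_int :: "real \<Rightarrow> real \<Rightarrow> real \<Rightarrow> real \<Rightarrow> (real \<Rightarrow> real) \<Rightarrow> ennreal" where
  "sing_int \<nu> a b c f = (\<integral>\<^sup>+ s\<in>{a..b}. ennreal (f s / (c - s) powr (1 - \<nu>)) \<partial>lborel)"

definition theta_n :: "real \<Rightarrow> real \<Rightarrow> nat \<Rightarrow> real \<Rightarrow> (real \<Rightarrow> real) \<Rightarrow> (real \<Rightarrow> real) \<Rightarrow> real \<Rightarrow> ennreal" where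
  "theta_n \<nu> h n K L \<theta> t =
     ennreal (\<theta> t)
     + ennreal K * (\<Sum>k\<in>{1..n}. sing_int \<nu> 0 (t - real k * h) (t - real k * h) (\<lambda>s. L s * \<theta> s))
     + ennreal K * (\<Sum>k\<in>{0..<n}. sing_int \<nu> h (t - real k * h) (t - real k * h) (\<lambda>s. L s * \<theta> (s - h)))"

end

theory Submission
  imports Defs
begin


lemma holder_nn:
  fixes f g :: "'a \<Rightarrow> real" and p q A B :: real
  assumes pq: "p > 1" "q > 1" "1/p + 1/q = 1"
   and [measurable]: "f \<in> borel_measurable M" "g \<in> borel_measurable M"
   and nn: "\<And>x. f x \<ge> 0" "\<And>x. g x \<ge> 0"
   and A: "(\<integral>\<^sup>+x. ennreal (f x powr p) \<partial>M) \<le> ennreal A"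
   and B: "(\<integral>\<^sup>+x. ennreal (g x powr q) \<partial>M) \<le> ennreal B"
   and A0: "A \<ge> 0" and B0: "B \<ge> 0"
  shows "(\<integral>\<^sup>+x. ennreal (f x * g x) \<partial>M) \<le> ennreal (A powr (1/p) * B powr (1/q))"
proof (cases "A = 0 \<or> B = 0")
  case True
  show ?thesis
  proof (cases "A = 0")
    case True
    with A have "(\<integral>\<^sup>+x. ennreal (f x powr p) \<partial>M) = 0" by simp
    then have "AE x in M. ennreal (f x powr p) = 0"
      by (subst (asm) nn_integral_0_iff_AE) auto
    then have "AE x in M. ennreal (f x * g x) = 0"
      by eventually_elim (use nn pq in auto)
    then have "(\<integral>\<^sup>+x. ennreal (f x * g x) \<partial>M) = 0"
      by (simp add: nn_integral_0_iff_AE)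
    then show ?thesis by simp
  next
    case False
    with True have "B = 0" by simp
    with B have "(\<integral>\<^sup>+x. ennreal (g x powr q) \<partial>M) = 0" by simp
    then have "AE x in M. ennreal (g x powr q) = 0"
      by (subst (asm) nn_integral_0_iff_AE) auto
    then have "AE x in M. ennreal (f x * g x) = 0"
      by eventually_elim (use nn pq in auto)
    then have "(\<integral>\<^sup>+x. ennreal (f x * g x) \<partial>M) = 0"
      by (simp add: nn_integral_0_iff_AE)
    then show ?thesis by simp
  qed
next
  case False
  then have Ap: "A > 0" and Bp: "B > 0" using A0 B0 by auto
  define a where "a = A powr (1/p)"
  define b where "b = B powr (1/q)"
  have ap: "a > 0" and bp: "b > 0" using Ap Bp by (auto simp: a_def b_def)
  have aA: "a powr p = A" using Ap pq by (simp add: a_def powr_powr)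
  have bB: "b powr q = B" using Bp pq by (simp add: b_def powr_powr)
  have pt: "f x * g x \<le> a*b/(p*A) * f x powr p + a*b/(q*B) * g x powr q" for x
  proof -
    have "(f x / a) * (g x / b) \<le> (f x / a) powr p / p + (g x / b) powr q / q"
      using Youngs_inequality[OF pq, of "f x / a" "g x / b"] nn ap bp by auto
    also have "\<dots> = f x powr p / (p*A) + g x powr q / (q*B)"
      using nn ap bp by (simp add: powr_divide aA bB mult.commute)
    finally have "a*b*((f x / a) * (g x / b)) \<le> a*b*(f x powr p / (p*A) + g x powr q / (q*B))"
      using ap bp by (intro mult_left_mono) auto
    then show ?thesis using ap bp by (simp add: field_simps)
  qed
  have "(\<integral>\<^sup>+x. ennreal (f x * g x) \<partial>M) \<le>
      (\<integral>\<^sup>+x. ennreal (a*b/(p*A)) * ennreal (f x powr p) + ennreal (a*b/(q*B)) * ennreal (g x powr q) \<partial>M)"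
    apply (rule nn_integral_mono)
    using pt ap bp Ap Bp pq
    by (simp add: ennreal_plus[symmetric] ennreal_mult[symmetric] del: ennreal_plus)
  also have "\<dots> = ennreal (a*b/(p*A)) * (\<integral>\<^sup>+x. ennreal (f x powr p) \<partial>M) + ennreal (a*b/(q*B)) * (\<integral>\<^sup>+x. ennreal (g x powr q) \<partial>M)"
    by (simp add: nn_integral_add nn_integral_cmult)
  also have "\<dots> \<le> ennreal (a*b/(p*A)) * ennreal A + ennreal (a*b/(q*B)) * ennreal B"
    by (intro add_mono mult_left_mono A B) auto
  also have "\<dots> = ennreal (a*b/(p*A) * A + a*b/(q*B) * B)"
    using ap bp Ap Bp pq by (simp add: ennreal_plus[symmetric] ennreal_mult[symmetric] del: ennreal_plus)
  also have "a*b/(p*A) * A + a*b/(q*B) * B = a*b*(1/p+1/q)"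
    using Ap Bp pq by (simp add: field_simps)
  also have "\<dots> = a * b" using pq by simp
  finally show ?thesis by (simp add: a_def b_def)
qed


definition kap :: "real \<Rightarrow> real \<Rightarrow> real" where
  "kap \<nu> x = (if 0 < x then x powr (\<nu> - 1) else 0)"

definition Bop :: "real \<Rightarrow> (real \<Rightarrow> real) \<Rightarrow> real \<Rightarrow> (real \<Rightarrow> ennreal) \<Rightarrow> real \<Rightarrow> ennreal" where
  "Bop \<nu> L \<mu> f t = (\<integral>\<^sup>+s. ennreal (L s) * ennreal (kap \<nu> (t - s) * exp (\<mu> * (t - s))) * f s \<partial>lborel)"

lemma kap_nonneg: "kap \<nu> x \<ge> 0" by (simp add: kap_def)

lemma kap_measurable[measurable]: "kap \<nu> \<in> borel_measurable borel"
  unfolding kap_def by measurable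

lemma kap_measurable_raw[measurable (raw)]:
  "f \<in> borel_measurable M \<Longrightarrow> (\<lambda>x. kap \<nu> (f x)) \<in> borel_measurable M"
  using measurable_compose[OF _ kap_measurable] by blast

lemma Bop_measurable[measurable]:
  assumes [measurable]: "L \<in> borel_measurable borel" "f \<in> borel_measurable borel"
  shows "Bop \<nu> L \<mu> f \<in> borel_measurable borel"
proof -
  have "(\<lambda>t. \<integral>\<^sup>+s. ennreal (L s) * ennreal (kap \<nu> (t - s) * exp (\<mu> * (t - s))) * f s \<partial>lborel) \<in> borel_measurable lborel"
    by (rule lborel.borel_measurable_nn_integral) measurable
  then show ?thesis unfolding Bop_def[abs_def] by simp
qed

lemma Bop_measurable_raw[measurable (raw)]:
  assumes [measurable]: "L \<in> borel_measurable borel" "f \<in> borel_measurable borel" "g \<in> borel_measurable M"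
  shows "(\<lambda>x. Bop \<nu> L \<mu> f (g x)) \<in> borel_measurable M"
  using measurable_compose[OF assms(3) Bop_measurable[OF assms(1,2)]] by simp


lemma powr_le_exp:
  fixes y b :: real
  assumes "y \<ge> 0" "0 < b" "b \<le> 1"
  shows "y powr b \<le> exp y"
proof (cases "y \<le> 1")
  case True
  then have "y powr b \<le> 1" using assms by (intro powr_le1) auto
  also have "1 \<le> exp y" using assms by simp
  finally show ?thesis .
next
  case False
  then have "y powr b \<le> y powr 1" using assms by (intro powr_mono) auto
  also have "\<dots> = y" using False by simp
  also have "y \<le> exp y" using exp_ge_add_one_self[of y] by linarith
  finally show ?thesis .
qed

lemma exp_neg_le_powr:
  fixes y b :: real
  assumes "y > 0" "0 < b" "b \<le> 1"
  shows "exp (-y) \<le> y powr (-b)"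
proof -
  have "y powr b \<le> exp y" using powr_le_exp[of y b] assms by simp
  then have "1 / exp y \<le> 1 / y powr b" using assms by (intro divide_left_mono) auto
  then show ?thesis using assms by (simp add: exp_minus powr_minus divide_inverse)
qed

lemma powint:
  fixes c X :: real
  assumes "c > -1" "X \<ge> 0"
  shows "(\<integral>\<^sup>+x. ennreal (x powr c) * indicator {0..X} x \<partial>lborel) = ennreal (X powr (c+1)/(c+1))"
  by (rule nn_integral_has_integral_lebesgue'[OF _ has_integral_powr_from_0[OF assms]]) auto

lemma pb:
  fixes \<beta> a \<mu> x u :: real
  assumes b: "\<beta> < 0" "a = \<beta> + 1" "0 < a" and m: "0 < \<mu>" and u: "0 < u" "u < x"
  shows "(x-u) powr \<beta> * u powr \<beta> * exp(-\<mu>*(x-u)) \<le>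
    (x/2) powr \<beta> * \<mu> powr (-a/2) * ((if u \<le> x/2 then (x/2) powr (-a/2) * u powr \<beta> else 0)
       + (if x/2 \<le> u then (x-u) powr (a/2-1) else 0))"
proof -
  have a1: "a/2 \<le> 1" "0 < a/2" using b by auto
  show ?thesis
  proof (cases "u \<le> x/2")
    case True
    have e1: "(x-u) powr \<beta> \<le> (x/2) powr \<beta>" using True u b by (intro powr_mono2') auto
    have "exp(-\<mu>*(x-u)) \<le> exp(-(\<mu>*(x/2)))" using True m by simp
    also have "\<dots> \<le> (\<mu>*(x/2)) powr (-(a/2))" using m u a1 by (intro exp_neg_le_powr) auto
    also have "\<dots> = \<mu> powr (-a/2) * (x/2) powr (-a/2)" using m u powr_mult[of \<mu> "x/2" "-(a/2)"] by simp
    finally have e2: "exp(-\<mu>*(x-u)) \<le> \<mu> powr (-a/2) * (x/2) powr (-a/2)" .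
    have "(x-u) powr \<beta> * u powr \<beta> * exp(-\<mu>*(x-u)) \<le> (x/2) powr \<beta> * u powr \<beta> * (\<mu> powr (-a/2) * (x/2) powr (-a/2))"
      using e1 e2 by (intro mult_mono) auto
    also have "\<dots> \<le> (x/2) powr \<beta> * \<mu> powr (-a/2) * ((if u \<le> x/2 then (x/2) powr (-a/2) * u powr \<beta> else 0)
       + (if x/2 \<le> u then (x-u) powr (a/2-1) else 0))"
      using True u by (simp add: algebra_simps)
    finally show ?thesis .
  next
    case False
    have e1: "u powr \<beta> \<le> (x/2) powr \<beta>" using False u b by (intro powr_mono2') auto
    have "exp(-\<mu>*(x-u)) = exp(-(\<mu>*(x-u)))" by simp
    also have "\<dots> \<le> (\<mu>*(x-u)) powr (-(a/2))" using m u a1 by (intro exp_neg_le_powr) auto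
    also have "\<dots> = \<mu> powr (-a/2) * (x-u) powr (-a/2)" using m u by (simp add: powr_mult)
    finally have e2: "exp(-\<mu>*(x-u)) \<le> \<mu> powr (-a/2) * (x-u) powr (-a/2)" .
    have "(x-u) powr \<beta> * u powr \<beta> * exp(-\<mu>*(x-u)) = u powr \<beta> * ((x-u) powr \<beta> * exp(-\<mu>*(x-u)))"
      by simp
    also have "\<dots> \<le> (x/2) powr \<beta> * ((x-u) powr \<beta> * (\<mu> powr (-a/2) * (x-u) powr (-a/2)))"
      using e1 e2 by (intro mult_mono) auto
    also have "(x-u) powr \<beta> * (\<mu> powr (-a/2) * (x-u) powr (-a/2)) = \<mu> powr (-a/2) * (x-u) powr (a/2-1)"
      proof -
      have e: "\<beta> + (-a/2) = a/2 - 1" using b(2) by (simp add: field_simps)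
      have "(x-u) powr \<beta> * (x-u) powr (-a/2) = (x-u) powr (a/2-1)"
        unfolding powr_add[symmetric] e ..
      then show ?thesis by (simp add: algebra_simps)
    qed
    also have "(x/2) powr \<beta> * (\<mu> powr (-a/2) * (x-u) powr (a/2-1)) = (x/2) powr \<beta> * \<mu> powr (-a/2) * ((if u \<le> x/2 then (x/2) powr (-a/2) * u powr \<beta> else 0)
       + (if x/2 \<le> u then (x-u) powr (a/2-1) else 0))"
      using False by simp
    finally show ?thesis .
  qed
qed

lemma ig:
  fixes \<beta> a \<mu> x :: real
  assumes b: "\<beta> < 0" "a = \<beta> + 1" "0 < a" and m: "0 < \<mu>" and x: "0 < x"
  shows "(\<integral>\<^sup>+u. ennreal ((x-u) powr \<beta> * u powr \<beta> * exp(-\<mu>*(x-u))) * indicator {0<..<x} u \<partial>lborel)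
     \<le> ennreal ((x/2) powr \<beta> * \<mu> powr (-a/2) * ((x/2) powr (a/2) * (3/a)))"
proof -
  define C where "C = (x/2) powr \<beta> * \<mu> powr (-a/2)"
  have C0: "C \<ge> 0" by (simp add: C_def)
  define F1 where "F1 u = ennreal ((x/2) powr (-a/2) * u powr \<beta>) * indicator {0..x/2} u" for u
  define F2 where "F2 u = ennreal ((x-u) powr (a/2-1)) * indicator {x/2..x} u" for u
  have [measurable]: "F1 \<in> borel_measurable borel" "F2 \<in> borel_measurable borel"
    unfolding F1_def[abs_def] F2_def[abs_def] by measurable
  have "(\<integral>\<^sup>+u. ennreal ((x-u) powr \<beta> * u powr \<beta> * exp(-\<mu>*(x-u))) * indicator {0<..<x} u \<partial>lborel)
     \<le> (\<integral>\<^sup>+u. ennreal C * (F1 u + F2 u) \<partial>lborel)"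
  proof (rule nn_integral_mono)
    fix u
    show "ennreal ((x-u) powr \<beta> * u powr \<beta> * exp(-\<mu>*(x-u))) * indicator {0<..<x} u \<le> ennreal C * (F1 u + F2 u)"
    proof (cases "0 < u \<and> u < x")
      case True
      have "ennreal ((x-u) powr \<beta> * u powr \<beta> * exp(-\<mu>*(x-u))) \<le>
        ennreal (C * ((if u \<le> x/2 then (x/2) powr (-a/2) * u powr \<beta> else 0)
       + (if x/2 \<le> u then (x-u) powr (a/2-1) else 0)))"
        using pb[OF b m, of u x] True by (intro ennreal_leI) (simp add: C_def)
      also have "\<dots> = ennreal C * (F1 u + F2 u)"
        using True C0 by (auto simp: F1_def F2_def ennreal_mult[symmetric] ennreal_plus[symmetric] simp del: ennreal_plus)
      finally show ?thesis using True by simp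
    qed auto
  qed
  also have "\<dots> = ennreal C * ((\<integral>\<^sup>+u. F1 u \<partial>lborel) + (\<integral>\<^sup>+u. F2 u \<partial>lborel))"
    by (simp add: nn_integral_cmult nn_integral_add)
  also have "(\<integral>\<^sup>+u. F1 u \<partial>lborel) = ennreal ((x/2) powr (-a/2)) * ennreal ((x/2) powr a / a)"
  proof -
    have "(\<integral>\<^sup>+u. F1 u \<partial>lborel) = ennreal ((x/2) powr (-a/2)) * (\<integral>\<^sup>+u. ennreal (u powr \<beta>) * indicator {0..x/2} u \<partial>lborel)"
      unfolding F1_def by (subst nn_integral_cmult[symmetric]) (auto simp: ennreal_mult mult.assoc)
    also have "(\<integral>\<^sup>+u. ennreal (u powr \<beta>) * indicator {0..x/2} u \<partial>lborel) = ennreal ((x/2) powr (\<beta>+1) / (\<beta>+1))"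
      using b x by (intro powint) auto
    finally show ?thesis using b by simp
  qed
  also have "(\<integral>\<^sup>+u. F2 u \<partial>lborel) = ennreal ((x/2) powr (a/2) / (a/2))"
  proof -
    have "(\<integral>\<^sup>+u. F2 u \<partial>lborel) = (\<integral>\<^sup>+v. F2 (x + (-1) * v) \<partial>lborel)"
      using nn_integral_real_affine[of F2 "-1" x] by simp
    also have "\<dots> = (\<integral>\<^sup>+v. ennreal (v powr (a/2-1)) * indicator {0..x/2} v \<partial>lborel)"
      by (intro nn_integral_cong) (auto simp: F2_def indicator_def)
    also have "\<dots> = ennreal ((x/2) powr (a/2-1+1) / (a/2-1+1))"
      using b x by (intro powint) auto
    finally show ?thesis by simp
  qed
  also have "ennreal C * (ennreal ((x/2) powr (-a/2)) * ennreal ((x/2) powr a / a) + ennreal ((x/2) powr (a/2) / (a/2)))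
     = ennreal (C * ((x/2) powr (-a/2) * ((x/2) powr a / a) + (x/2) powr (a/2) / (a/2)))"
    using C0 b by (simp add: ennreal_mult[symmetric] ennreal_plus[symmetric] del: ennreal_plus)
  also have "(x/2) powr (-a/2) * ((x/2) powr a / a) + (x/2) powr (a/2) / (a/2) = (x/2) powr (a/2) * (3/a)"
  proof -
    have "(x/2) powr (-a/2) * (x/2) powr a = (x/2) powr (a/2)"
      by (simp add: powr_add[symmetric])
    then show ?thesis using b(3) by (simp add: field_simps)
  qed
  finally show ?thesis by (simp add: C_def mult.assoc)
qed


locale gron =
  fixes \<nu> h T q :: real and n :: nat and L \<theta> \<xi> :: "real \<Rightarrow> real"
  assumes nu: "0 < \<nu>" "\<nu> < 1" and hpos: "0 < h" and Tpos: "0 < T" and qbig: "q > 1/\<nu>"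
    and nT: "real n * h \<le> T" "T < (real n + 1) * h"
    and Lnn: "\<And>t. L t \<ge> 0" and thnn: "\<And>t. \<theta> t \<ge> 0" and xinn: "\<And>t. \<xi> t \<ge> 0"
    and Lz: "\<And>t. t < 0 \<or> t > T \<Longrightarrow> L t = 0"
    and thz: "\<And>t. t < 0 \<or> t > T \<Longrightarrow> \<theta> t = 0"
    and xiz: "\<And>t. t < 0 \<or> t > T \<Longrightarrow> \<xi> t = 0"
    and Lm[measurable]: "L \<in> borel_measurable borel"
    and thetam[measurable]: "\<theta> \<in> borel_measurable borel"
    and xim[measurable]: "\<xi> \<in> borel_measurable borel"
    and Lq: "(\<integral>\<^sup>+t. ennreal (L t powr q) \<partial>lborel) < \<infinity>"
    and xip: "(\<integral>\<^sup>+t. ennreal (\<xi> t powr (q/(q-1))) \<partial>lborel) < \<infinity>"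
    and hyp: "AE t in lborel. 0 \<le> t \<and> t \<le> T \<longrightarrow> ennreal (\<xi> t) \<le> ennreal (\<theta> t)
        + Bop \<nu> L 0 (\<lambda>s. ennreal (\<xi> s)) t + Bop \<nu> L 0 (\<lambda>s. ennreal (\<xi> (s-h))) t"
begin

definition "p = q/(q-1)"
definition "\<beta> = (\<nu>-1)*p"
definition "a = \<beta> + 1"
definition "\<Lambda>1 = enn2real (\<integral>\<^sup>+t. ennreal (L t powr q) \<partial>lborel) + 1"
definition "CC = 2 powr (-\<beta>) * T powr (a/2) * (3/a)"
definition "\<delta> = (1/(4*\<Lambda>1 powr (1/q))) powr p"
definition "lam = ((CC/\<delta>) powr (2/a)) / p"

lemma q1: "q > 1"
proof -
  have "1/\<nu> > 1" using nu by simp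
  then show ?thesis using qbig by simp
qed

lemma p1: "p > 1" using q1 by (simp add: p_def field_simps)
lemma pq: "1/q + 1/p = 1" using q1 by (simp add: p_def field_simps)
lemma b0: "\<beta> < 0" using nu p1 by (simp add: \<beta>_def mult_neg_pos)
lemma a0: "0 < a"
proof -
  have "\<nu> * q > 1" using qbig nu by (simp add: field_simps)
  then have "(\<nu>-1)*q + (q - 1) > 0" by (simp add: algebra_simps)
  then have "((\<nu>-1)*q + (q - 1))/(q-1) > 0" using q1 by simp
  also have "((\<nu>-1)*q + (q - 1))/(q-1) = a" using q1 by (simp add: a_def \<beta>_def p_def field_simps)
  finally show ?thesis .
qed
lemma Lam_pos: "\<Lambda>1 > 0" unfolding \<Lambda>1_def by (smt (verit) enn2real_nonneg)
lemma Lq_le: "(\<integral>\<^sup>+t. ennreal (L t powr q) \<partial>lborel) \<le> ennreal \<Lambda>1"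
proof -
  have "(\<integral>\<^sup>+t. ennreal (L t powr q) \<partial>lborel) = ennreal (enn2real (\<integral>\<^sup>+t. ennreal (L t powr q) \<partial>lborel))"
    using Lq by (simp add: ennreal_enn2real_if)
  also have "\<dots> \<le> ennreal \<Lambda>1" by (simp add: \<Lambda>1_def)
  finally show ?thesis .
qed
lemma CC_pos: "CC > 0" using a0 Tpos by (simp add: CC_def)
lemma delta_pos: "\<delta> > 0" using Lam_pos by (simp add: \<delta>_def)
lemma lam_pos: "lam > 0" using CC_pos delta_pos p1 by (simp add: lam_def)

lemma D_eq: "2 powr (-\<beta>) * (lam*p) powr (-a/2) * T powr (a/2) * (3/a) = \<delta>"
proof -
  have "lam * p = (CC/\<delta>) powr (2/a)" using p1 by (simp add: lam_def)
  then have "(lam*p) powr (-a/2) = (CC/\<delta>) powr ((2/a)*(-a/2))" by (simp add: powr_powr)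
  also have "(2/a)*(-a/2) = -1" using a0 by simp
  also have "(CC/\<delta>) powr (-1) = \<delta>/CC" using CC_pos delta_pos by (simp add: powr_minus_divide)
  finally show ?thesis using CC_pos a0 Tpos delta_pos by (simp add: CC_def field_simps)
qed

lemma c0_eq: "\<Lambda>1 powr (1/q) * \<delta> powr (1/p) = 1/4"
proof -
  have "\<delta> powr (1/p) = 1/(4*\<Lambda>1 powr (1/q))"
    unfolding \<delta>_def using p1 Lam_pos by (simp add: powr_powr)
  then show ?thesis using Lam_pos by simp
qed

lemma kap_pow_eq:
  assumes "0 < u" "u < x"
  shows "(kap \<nu> (x-u) * kap \<nu> u * exp(lam*u)) powr p
     = exp(lam*p*x) * ((x-u) powr \<beta> * u powr \<beta> * exp(-(lam*p)*(x-u)))"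
proof -
  have "(kap \<nu> (x-u) * kap \<nu> u * exp(lam*u)) powr p = ((x-u) powr (\<nu>-1)) powr p * (u powr (\<nu>-1)) powr p * exp(lam*u) powr p"
    using assms by (simp add: kap_def powr_mult)
  also have "\<dots> = (x-u) powr \<beta> * u powr \<beta> * exp(lam*p*u)"
  proof -
    have "exp(lam*u) powr p = exp(lam*p*u)" by (simp add: powr_def mult_ac)
    then show ?thesis by (simp add: powr_powr \<beta>_def mult_ac)
  qed
  also have "exp(lam*p*u) = exp(lam*p*x) * exp(-(lam*p)*(x-u))"
    by (simp add: exp_add[symmetric] algebra_simps)
  finally show ?thesis by simp
qed

lemma KI:
  assumes x: "0 < x" "x \<le> 2*T"
  shows "(\<integral>\<^sup>+u. ennreal ((kap \<nu> (x-u) * kap \<nu> u * exp(lam*u)) powr p) \<partial>lborel)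
     \<le> ennreal (exp(lam*p*x) * x powr \<beta> * \<delta>)"
proof -
  have mp: "0 < lam*p" using lam_pos p1 by simp
  have "(\<integral>\<^sup>+u. ennreal ((kap \<nu> (x-u) * kap \<nu> u * exp(lam*u)) powr p) \<partial>lborel)
     = (\<integral>\<^sup>+u. ennreal (exp(lam*p*x)) * (ennreal ((x-u) powr \<beta> * u powr \<beta> * exp(-(lam*p)*(x-u))) * indicator {0<..<x} u) \<partial>lborel)"
  proof (intro nn_integral_cong)
    fix u
    show "ennreal ((kap \<nu> (x-u) * kap \<nu> u * exp(lam*u)) powr p) =
      ennreal (exp(lam*p*x)) * (ennreal ((x-u) powr \<beta> * u powr \<beta> * exp(-(lam*p)*(x-u))) * indicator {0<..<x} u)"
    proof (cases "0 < u \<and> u < x")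
      case True
      then show ?thesis using kap_pow_eq[of u x] by (simp add: ennreal_mult[symmetric])
    next
      case False
      then have "kap \<nu> (x-u) * kap \<nu> u = 0" by (auto simp: kap_def)
      then show ?thesis using False by auto
    qed
  qed
  also have "\<dots> = ennreal (exp(lam*p*x)) * (\<integral>\<^sup>+u. ennreal ((x-u) powr \<beta> * u powr \<beta> * exp(-(lam*p)*(x-u))) * indicator {0<..<x} u \<partial>lborel)"
    by (rule nn_integral_cmult) measurable
  also have "\<dots> \<le> ennreal (exp(lam*p*x)) * ennreal ((x/2) powr \<beta> * (lam*p) powr (-a/2) * ((x/2) powr (a/2) * (3/a)))"
    by (intro mult_left_mono ig[OF b0 _ a0 mp x(1)]) (auto simp: a_def)
  also have "(x/2) powr \<beta> * (lam*p) powr (-a/2) * ((x/2) powr (a/2) * (3/a)) \<le> x powr \<beta> * \<delta>"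
  proof -
    have e1: "(x/2) powr \<beta> = x powr \<beta> * 2 powr (-\<beta>)"
      using x by (simp add: powr_divide powr_minus_divide)
    have e2: "(x/2) powr (a/2) \<le> T powr (a/2)" using x a0 by (intro powr_mono2) auto
    have "(x/2) powr \<beta> * (lam*p) powr (-a/2) * ((x/2) powr (a/2) * (3/a))
        \<le> (x/2) powr \<beta> * (lam*p) powr (-a/2) * (T powr (a/2) * (3/a))"
    proof -
      have "(x/2) powr (a/2) * (3/a) \<le> T powr (a/2) * (3/a)" using e2 a0 by (intro mult_right_mono) auto
      then show ?thesis by (intro mult_left_mono) auto
    qed
    also have "\<dots> = x powr \<beta> * (2 powr (-\<beta>) * (lam*p) powr (-a/2) * T powr (a/2) * (3/a))"
      by (simp add: e1)
    also have "\<dots> = x powr \<beta> * \<delta>" by (subst D_eq) (rule refl)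
    finally show ?thesis .
  qed
  then have "ennreal (exp(lam*p*x)) * ennreal ((x/2) powr \<beta> * (lam*p) powr (-a/2) * ((x/2) powr (a/2) * (3/a)))
      \<le> ennreal (exp(lam*p*x)) * ennreal (x powr \<beta> * \<delta>)"
    by (intro mult_left_mono ennreal_leI) auto
  also have "\<dots> = ennreal (exp(lam*p*x) * x powr \<beta> * \<delta>)"
    using delta_pos by (simp add: ennreal_mult[symmetric] mult.assoc)
  finally show ?thesis .
qed

end


context gron begin

lemma KH:
  "(\<integral>\<^sup>+v. ennreal ((kap \<nu> v * exp(-(lam* v))) powr p) * indicator {..T} v \<partial>lborel) \<le> ennreal \<delta>"
proof -
  have mp: "0 < lam*p" using lam_pos p1 by simp
  have "(\<integral>\<^sup>+v. ennreal ((kap \<nu> v * exp(-(lam* v))) powr p) * indicator {..T} v \<partial>lborel)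
     \<le> (\<integral>\<^sup>+v. ennreal ((lam*p) powr (-a/2)) * (ennreal (v powr (a/2-1)) * indicator {0..T} v) \<partial>lborel)"
  proof (intro nn_integral_mono)
    fix v
    show "ennreal ((kap \<nu> v * exp(-(lam* v))) powr p) * indicator {..T} v
      \<le> ennreal ((lam*p) powr (-a/2)) * (ennreal (v powr (a/2-1)) * indicator {0..T} v)"
    proof (cases "0 < v \<and> v \<le> T")
      case True
      have "(kap \<nu> v * exp(-(lam* v))) powr p = v powr \<beta> * exp (-(lam*p* v))"
      proof -
        have "exp(-(lam* v)) powr p = exp(-(lam*p* v))" by (simp add: powr_def mult_ac)
        then show ?thesis using True by (simp add: kap_def powr_mult powr_powr \<beta>_def mult_ac)
      qed
      also have "\<dots> \<le> v powr \<beta> * (lam*p* v) powr (-(a/2))"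
        using True mp a0 b0 by (intro mult_left_mono exp_neg_le_powr) (auto simp: a_def)
      also have "\<dots> = (lam*p) powr (-a/2) * (v powr \<beta> * v powr (-a/2))"
        using True mp by (simp add: powr_mult)
      also have "v powr \<beta> * v powr (-a/2) = v powr (a/2-1)"
      proof -
        have e: "\<beta> + (-a/2) = a/2 - 1" by (simp add: a_def field_simps)
        show ?thesis unfolding powr_add[symmetric] e ..
      qed
      finally show ?thesis using True by (simp add: ennreal_mult[symmetric])
    next
      case False
      then show ?thesis by (auto simp: kap_def indicator_def)
    qed
  qed
  also have "\<dots> = ennreal ((lam*p) powr (-a/2)) * (\<integral>\<^sup>+v. ennreal (v powr (a/2-1)) * indicator {0..T} v \<partial>lborel)"
    by (rule nn_integral_cmult) measurable
  also have "(\<integral>\<^sup>+v. ennreal (v powr (a/2-1)) * indicator {0..T} v \<partial>lborel) = ennreal (T powr (a/2-1+1)/(a/2-1+1))"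
    using a0 Tpos by (intro powint) auto
  also have "ennreal ((lam*p) powr (-a/2)) * ennreal (T powr (a/2-1+1)/(a/2-1+1)) \<le> ennreal \<delta>"
  proof -
    have "(lam*p) powr (-a/2) * (T powr (a/2)/(a/2)) \<le> 2 powr (-\<beta>) * (lam*p) powr (-a/2) * T powr (a/2) * (3/a)"
    proof -
      have t2: "1 \<le> 2 powr (-\<beta>)" using b0 by (intro ge_one_powr_ge_zero) auto
      have f1: "1 * (3/a) \<le> 2 powr (-\<beta>) * (3/a)" using a0 by (intro mult_right_mono[OF t2]) auto
      have f2: "2/a \<le> 3/a" using a0 by (intro divide_right_mono) auto
      have X0: "0 \<le> (lam*p) powr (-a/2) * T powr (a/2)" by simp
      have "(lam*p) powr (-a/2) * T powr (a/2) * (2/a) \<le> (lam*p) powr (-a/2) * T powr (a/2) * (2 powr (-\<beta>) * (3/a))"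
        using f1 f2 X0 by (intro mult_left_mono) auto
      then show ?thesis by (simp add: mult_ac)
    qed
    then show ?thesis unfolding D_eq using a0 by (subst ennreal_mult[symmetric]) (auto intro!: ennreal_leI)
  qed
  finally show ?thesis .
qed

lemma powr_p_inv: "(exp(lam*p*x) * x powr \<beta> * \<delta>) powr (1/p) = exp(lam*x) * x powr (\<nu>-1) * \<delta> powr (1/p)"
  if "x > 0" for x
proof -
  have "(exp(lam*p*x) * x powr \<beta> * \<delta>) powr (1/p) = exp(lam*p*x) powr (1/p) * (x powr \<beta>) powr (1/p) * \<delta> powr (1/p)"
    using delta_pos by (simp add: powr_mult)
  also have "exp(lam*p*x) powr (1/p) = exp(lam*x)" using p1 by (simp add: powr_def)
  also have "(x powr \<beta>) powr (1/p) = x powr (\<nu>-1)" using p1 by (simp add: powr_powr \<beta>_def)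
  finally show ?thesis .
qed

lemma K1:
  assumes al: "0 \<le> \<alpha>" and x: "0 < x" "\<alpha> + x \<le> T"
  shows "(\<integral>\<^sup>+s. ennreal (L s) * ennreal (kap \<nu> (\<alpha>+x-s) * kap \<nu> (s-\<alpha>) * exp(lam*(s-\<alpha>))) \<partial>lborel)
     \<le> ennreal (1/4 * (kap \<nu> x * exp(lam*x)))"
proof -
  define g where "g s = kap \<nu> (\<alpha>+x-s) * kap \<nu> (s-\<alpha>) * exp(lam*(s-\<alpha>))" for s
  have g0: "g s \<ge> 0" for s by (simp add: g_def kap_nonneg)
  have [measurable]: "g \<in> borel_measurable borel" unfolding g_def[abs_def] by measurable
  have "(\<integral>\<^sup>+s. ennreal (L s) * ennreal (g s) \<partial>lborel) = (\<integral>\<^sup>+s. ennreal (L s * g s) \<partial>lborel)"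
    using Lnn g0 by (simp add: ennreal_mult)
  also have "\<dots> \<le> ennreal (\<Lambda>1 powr (1/q) * (exp(lam*p*x) * x powr \<beta> * \<delta>) powr (1/p))"
  proof (rule holder_nn[OF q1 p1 pq])
    show "L \<in> borel_measurable lborel" by measurable
    show "\<And>x. 0 \<le> L x" by (rule Lnn)
    show "\<And>x. 0 \<le> g x" by (rule g0)
    show "(\<integral>\<^sup>+t. ennreal (L t powr q) \<partial>lborel) \<le> ennreal \<Lambda>1" by (rule Lq_le)
    show "g \<in> borel_measurable lborel" by measurable
    show "0 \<le> \<Lambda>1" using Lam_pos by simp
    show "0 \<le> exp(lam*p*x) * x powr \<beta> * \<delta>" using delta_pos by simp
    have "(\<integral>\<^sup>+s. ennreal (g s powr p) \<partial>lborel) = (\<integral>\<^sup>+u. ennreal (g (\<alpha> + 1 * u) powr p) \<partial>lborel)"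
      using nn_integral_real_affine[of "\<lambda>s. ennreal (g s powr p)" 1 \<alpha>] by simp
    also have "\<dots> = (\<integral>\<^sup>+u. ennreal ((kap \<nu> (x-u) * kap \<nu> u * exp(lam*u)) powr p) \<partial>lborel)"
      by (simp add: g_def)
    also have "\<dots> \<le> ennreal (exp(lam*p*x) * x powr \<beta> * \<delta>)"
      using x al Tpos by (intro KI) auto
    finally show "(\<integral>\<^sup>+s. ennreal (g s powr p) \<partial>lborel) \<le> ennreal (exp(lam*p*x) * x powr \<beta> * \<delta>)" .
  qed
  also have "\<Lambda>1 powr (1/q) * (exp(lam*p*x) * x powr \<beta> * \<delta>) powr (1/p) = 1/4 * (kap \<nu> x * exp(lam*x))"
    using x c0_eq by (simp add: powr_p_inv kap_def)
  finally show ?thesis by (simp add: g_def)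
qed

lemma KH1:
  assumes s: "0 \<le> s"
  shows "(\<integral>\<^sup>+t. ennreal (L t) * ennreal (kap \<nu> (t-s) * exp(-lam*(t-s))) \<partial>lborel) \<le> ennreal (1/4)"
proof -
  define g where "g t = kap \<nu> (t-s) * exp(-lam*(t-s)) * indicator {..s+T} t" for t
  have g0: "g t \<ge> 0" for t by (simp add: g_def kap_nonneg)
  have [measurable]: "g \<in> borel_measurable borel" unfolding g_def[abs_def] by measurable
  have "(\<integral>\<^sup>+t. ennreal (L t) * ennreal (kap \<nu> (t-s) * exp(-lam*(t-s))) \<partial>lborel) = (\<integral>\<^sup>+t. ennreal (L t * g t) \<partial>lborel)"
  proof (intro nn_integral_cong)
    fix t
    show "ennreal (L t) * ennreal (kap \<nu> (t-s) * exp(-lam*(t-s))) = ennreal (L t * g t)"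
    proof (cases "t \<le> s + T")
      case True then show ?thesis using Lnn by (simp add: g_def ennreal_mult kap_nonneg)
    next
      case False
      then have "L t = 0" using s by (intro Lz) auto
      then show ?thesis by simp
    qed
  qed
  also have "\<dots> \<le> ennreal (\<Lambda>1 powr (1/q) * \<delta> powr (1/p))"
  proof (rule holder_nn[OF q1 p1 pq])
    show "L \<in> borel_measurable lborel" by measurable
    show "\<And>x. 0 \<le> L x" by (rule Lnn)
    show "\<And>x. 0 \<le> g x" by (rule g0)
    show "(\<integral>\<^sup>+t. ennreal (L t powr q) \<partial>lborel) \<le> ennreal \<Lambda>1" by (rule Lq_le)
    show "g \<in> borel_measurable lborel" by measurable
    show "0 \<le> \<Lambda>1" using Lam_pos by simp
    show "0 \<le> \<delta>" using delta_pos by simp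
    have "(\<integral>\<^sup>+t. ennreal (g t powr p) \<partial>lborel) = (\<integral>\<^sup>+v. ennreal (g (s + 1 * v) powr p) \<partial>lborel)"
      using nn_integral_real_affine[of "\<lambda>t. ennreal (g t powr p)" 1 s] by simp
    also have "\<dots> = (\<integral>\<^sup>+v. ennreal ((kap \<nu> v * exp(-(lam * v))) powr p) * indicator {..T} v \<partial>lborel)"
      by (intro nn_integral_cong) (auto simp: g_def indicator_def)
    also have "\<dots> \<le> ennreal \<delta>" by (rule KH)
    finally show "(\<integral>\<^sup>+t. ennreal (g t powr p) \<partial>lborel) \<le> ennreal \<delta>" .
  qed
  also have "\<Lambda>1 powr (1/q) * \<delta> powr (1/p) = 1/4" by (rule c0_eq)
  finally show ?thesis .
qed

end


lemma Bop_add: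
  assumes [measurable]: "L \<in> borel_measurable borel" "f \<in> borel_measurable borel" "g \<in> borel_measurable borel"
  shows "Bop \<nu> L \<mu> (\<lambda>s. f s + g s) t = Bop \<nu> L \<mu> f t + Bop \<nu> L \<mu> g t"
  unfolding Bop_def by (simp add: distrib_left nn_integral_add)

lemma Bop_cmult:
  assumes [measurable]: "L \<in> borel_measurable borel" "f \<in> borel_measurable borel"
  shows "Bop \<nu> L \<mu> (\<lambda>s. c * f s) t = c * Bop \<nu> L \<mu> f t"
  unfolding Bop_def by (subst nn_integral_cmult[symmetric]) (auto simp: mult_ac)

lemma Bop_sum:
  assumes [measurable]: "L \<in> borel_measurable borel" "\<And>j. j \<in> J \<Longrightarrow> f j \<in> borel_measurable borel"
  shows "Bop \<nu> L \<mu> (\<lambda>s. \<Sum>j\<in>J. f j s) t = (\<Sum>j\<in>J. Bop \<nu> L \<mu> (f j) t)"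
  unfolding Bop_def by (simp add: sum_distrib_left nn_integral_sum)

lemma Bop_mono:
  assumes "\<And>s. f s \<le> g s"
  shows "Bop \<nu> L \<mu> f t \<le> Bop \<nu> L \<mu> g t"
  unfolding Bop_def by (intro nn_integral_mono mult_left_mono assms) auto

lemma Bop_mono_mu:
  assumes "\<mu> \<le> \<mu>'"
  shows "Bop \<nu> L \<mu> f t \<le> Bop \<nu> L \<mu>' f t"
  unfolding Bop_def
proof (intro nn_integral_mono mult_right_mono)
  fix s
  have "kap \<nu> (t - s) * exp (\<mu> * (t - s)) \<le> kap \<nu> (t - s) * exp (\<mu>' * (t - s))"
    using assms by (cases "0 < t - s") (auto simp: kap_def intro!: mult_left_mono mult_right_mono)
  then show "ennreal (L s) * ennreal (kap \<nu> (t - s) * exp (\<mu> * (t - s))) \<le> ennreal (L s) * ennreal (kap \<nu> (t - s) * exp (\<mu>' * (t - s)))"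
    by (rule mult_left_mono[OF ennreal_leI]) auto
qed auto

lemma Bop_exp_le:
  assumes "\<mu> \<ge> 0" "t \<le> T" "\<And>s. s < 0 \<Longrightarrow> L s = 0"
    and [measurable]: "L \<in> borel_measurable borel" "f \<in> borel_measurable borel"
  shows "Bop \<nu> L \<mu> f t \<le> ennreal (exp (\<mu>*T)) * Bop \<nu> L 0 f t"
  unfolding Bop_def
proof (subst nn_integral_cmult[symmetric], measurable, intro nn_integral_mono)
  fix s
  have "ennreal (L s) * ennreal (kap \<nu> (t - s) * exp (\<mu> * (t - s))) \<le> ennreal (exp (\<mu>*T)) * (ennreal (L s) * ennreal (kap \<nu> (t - s) * exp (0 * (t - s))))"
  proof (cases "s < 0 \<or> t - s \<le> 0")
    case True
    then show ?thesis using assms by (auto simp: kap_def)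
  next
    case False
    then have "exp (\<mu> * (t - s)) \<le> exp (\<mu>*T)" using assms by (auto intro!: mult_left_mono)
    then have "kap \<nu> (t - s) * exp (\<mu> * (t - s)) \<le> kap \<nu> (t - s) * exp (\<mu>*T)"
      by (rule mult_left_mono) (simp add: kap_nonneg)
    then have "kap \<nu> (t - s) * exp (\<mu> * (t - s)) \<le> exp (\<mu>*T) * kap \<nu> (t - s)"
      by (simp add: mult.commute)
    then have "ennreal (kap \<nu> (t - s) * exp (\<mu> * (t - s))) \<le> ennreal (exp (\<mu>*T)) * ennreal (kap \<nu> (t - s))"
      by (simp add: ennreal_mult[symmetric] kap_nonneg ennreal_leI)
    then show ?thesis
      by (simp add: mult_ac) (metis mult.commute mult.left_commute mult_left_mono zero_le)
  qed
  then show "ennreal (L s) * ennreal (kap \<nu> (t - s) * exp (\<mu> * (t - s))) * f s \<le> ennreal (exp (\<mu>*T)) * (ennreal (L s) * ennreal (kap \<nu> (t - s) * exp (0 * (t - s))) * f s)"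
    by (metis mult.assoc mult_right_mono zero_le)
qed

lemma Bop_zero:
  assumes "\<And>s. s < t \<Longrightarrow> ennreal (L s) * f s = 0"
  shows "Bop \<nu> L \<mu> f t = 0"
proof -
  have "ennreal (L s) * ennreal (kap \<nu> (t - s) * exp (\<mu> * (t - s))) * f s = 0" for s
  proof (cases "s < t")
    case True
    then have "ennreal (L s) * f s = 0" by (rule assms)
    then show ?thesis by (metis mult.assoc mult.commute mult_zero_left)
  qed (auto simp: kap_def)
  then have "(\<lambda>s. ennreal (L s) * ennreal (kap \<nu> (t - s) * exp (\<mu> * (t - s))) * f s) = (\<lambda>s. 0)"
    by (intro ext)
  then show ?thesis unfolding Bop_def by simp
qed


context gron begin

lemma inner_bound:
  assumes r: "0 \<le> r" and c: "c \<ge> 0" and t: "t \<le> T"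
  shows "(\<integral>\<^sup>+s. ennreal (L s) * ennreal (kap \<nu> (t - s) * exp (0 * (t - s))) * ennreal (kap \<nu> (s - c - r) * exp (lam * (s - c - r))) \<partial>lborel)
    \<le> ennreal (1/4) * ennreal (kap \<nu> (t - c - r) * exp (lam * (t - c - r)))"
proof (cases "t - c - r \<le> 0")
  case True
  have "ennreal (L s) * ennreal (kap \<nu> (t - s) * exp (0 * (t - s))) * ennreal (kap \<nu> (s - c - r) * exp (lam * (s - c - r))) = 0" for s
  proof (cases "s < t")
    case True
    then have "kap \<nu> (s - c - r) = 0" using \<open>t - c - r \<le> 0\<close> by (simp add: kap_def)
    then show ?thesis by simp
  qed (simp add: kap_def)
  then have "(\<lambda>s. ennreal (L s) * ennreal (kap \<nu> (t - s) * exp (0 * (t - s))) * ennreal (kap \<nu> (s - c - r) * exp (lam * (s - c - r)))) = (\<lambda>s. 0)"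
    by (intro ext)
  then show ?thesis by simp
next
  case False
  have "(\<integral>\<^sup>+s. ennreal (L s) * ennreal (kap \<nu> (t - s) * exp (0 * (t - s))) * ennreal (kap \<nu> (s - c - r) * exp (lam * (s - c - r))) \<partial>lborel)
    = (\<integral>\<^sup>+s. ennreal (L s) * ennreal (kap \<nu> ((c + r) + (t - c - r) - s) * kap \<nu> (s - (c + r)) * exp (lam * (s - (c + r)))) \<partial>lborel)"
    by (intro nn_integral_cong) (simp add: ennreal_mult[symmetric] kap_nonneg mult.assoc algebra_simps)
  also have "\<dots> \<le> ennreal (1/4 * (kap \<nu> (t - c - r) * exp (lam * (t - c - r))))"
    using False r c t by (intro K1) auto
  also have "\<dots> = ennreal (1/4) * ennreal (kap \<nu> (t - c - r) * exp (lam * (t - c - r)))"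
    by (rule ennreal_mult) (auto simp: kap_nonneg)
  finally show ?thesis .
qed

lemma comp:
  assumes c: "c \<ge> 0" and t: "t \<le> T" and [measurable]: "f \<in> borel_measurable borel"
  shows "Bop \<nu> L 0 (\<lambda>s. Bop \<nu> L lam f (s - c)) t \<le> ennreal (1/4) * Bop \<nu> L lam f (t - c)"
proof -
  define F where "F s r = ennreal (L s) * ennreal (kap \<nu> (t - s) * exp (0 * (t - s))) *
     (ennreal (L r) * ennreal (kap \<nu> (s - c - r) * exp (lam * (s - c - r))) * f r)" for s r
  have Fm[measurable]: "case_prod F \<in> borel_measurable (lborel \<Otimes>\<^sub>M lborel)"
    unfolding F_def by measurable
  have "Bop \<nu> L 0 (\<lambda>s. Bop \<nu> L lam f (s - c)) t = (\<integral>\<^sup>+s. \<integral>\<^sup>+r. F s r \<partial>lborel \<partial>lborel)"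
    unfolding Bop_def F_def
    by (intro nn_integral_cong nn_integral_cmult[symmetric]) measurable
  also have "\<dots> = (\<integral>\<^sup>+r. \<integral>\<^sup>+s. F s r \<partial>lborel \<partial>lborel)"
    by (rule lborel_pair.Fubini'[symmetric]) (rule Fm)
  also have "\<dots> = (\<integral>\<^sup>+r. (ennreal (L r) * f r) * (\<integral>\<^sup>+s. ennreal (L s) * ennreal (kap \<nu> (t - s) * exp (0 * (t - s))) * ennreal (kap \<nu> (s - c - r) * exp (lam * (s - c - r))) \<partial>lborel) \<partial>lborel)"
    unfolding F_def
    by (intro nn_integral_cong, subst nn_integral_cmult[symmetric]) (measurable, intro nn_integral_cong, simp add: mult_ac)
  also have "\<dots> \<le> (\<integral>\<^sup>+r. (ennreal (L r) * f r) * (ennreal (1/4) * ennreal (kap \<nu> (t - c - r) * exp (lam * (t - c - r)))) \<partial>lborel)"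
  proof (intro nn_integral_mono)
    fix r
    show "(ennreal (L r) * f r) * (\<integral>\<^sup>+s. ennreal (L s) * ennreal (kap \<nu> (t - s) * exp (0 * (t - s))) * ennreal (kap \<nu> (s - c - r) * exp (lam * (s - c - r))) \<partial>lborel)
      \<le> (ennreal (L r) * f r) * (ennreal (1/4) * ennreal (kap \<nu> (t - c - r) * exp (lam * (t - c - r))))"
    proof (cases "r < 0")
      case True
      then show ?thesis using Lz[of r] by simp
    next
      case False
      then show ?thesis using c t by (intro mult_left_mono inner_bound) auto
    qed
  qed
  also have "\<dots> = ennreal (1/4) * Bop \<nu> L lam f (t - c)"
    unfolding Bop_def
    by (subst nn_integral_cmult[symmetric]) (measurable, intro nn_integral_cong, simp add: mult_ac)
  finally show ?thesis .
qed

end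


context gron begin

lemma Lxi_finite: "(\<integral>\<^sup>+t. ennreal (L t * \<xi> t) \<partial>lborel) < \<infinity>"
proof -
  define X where "X = enn2real (\<integral>\<^sup>+t. ennreal (\<xi> t powr p) \<partial>lborel)"
  have Xe: "(\<integral>\<^sup>+t. ennreal (\<xi> t powr p) \<partial>lborel) \<le> ennreal X"
    using xip unfolding X_def p_def by (simp add: ennreal_enn2real_if)
  have "(\<integral>\<^sup>+t. ennreal (L t * \<xi> t) \<partial>lborel) \<le> ennreal (\<Lambda>1 powr (1/q) * X powr (1/p))"
  proof (rule holder_nn[OF q1 p1 pq])
    show "L \<in> borel_measurable lborel" "\<xi> \<in> borel_measurable lborel" by measurable
    show "\<And>x. 0 \<le> L x" by (rule Lnn)
    show "\<And>x. 0 \<le> \<xi> x" by (rule xinn)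
    show "(\<integral>\<^sup>+t. ennreal (L t powr q) \<partial>lborel) \<le> ennreal \<Lambda>1" by (rule Lq_le)
    show "(\<integral>\<^sup>+t. ennreal (\<xi> t powr p) \<partial>lborel) \<le> ennreal X" by (rule Xe)
    show "0 \<le> \<Lambda>1" using Lam_pos by simp
    show "0 \<le> X" by (simp add: X_def)
  qed
  also have "\<dots> < \<infinity>" by simp
  finally show ?thesis .
qed

lemma H0:
  assumes [measurable]: "d \<in> borel_measurable borel"
    and dz: "\<And>t. t < 0 \<or> t > T \<Longrightarrow> d t = 0"
    and dle: "\<And>t. d t \<le> ennreal (\<xi> t)"
    and ineq: "AE t in lborel. t < \<tau> \<longrightarrow> d t \<le> Bop \<nu> L 0 d t"
  shows "AE t in lborel. t < \<tau> \<longrightarrow> d t = 0"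
proof -
  define e where "e t = d t * ennreal (exp (-lam * t)) * indicator {..<\<tau>} t" for t
  have em[measurable]: "e \<in> borel_measurable borel" unfolding e_def[abs_def] by measurable
  have eB: "Bop \<nu> L 0 d t * ennreal (exp (-lam * t)) = Bop \<nu> L (-lam) e t" if "t < \<tau>" for t
  proof -
    have "Bop \<nu> L 0 d t * ennreal (exp (-lam * t)) = (\<integral>\<^sup>+s. ennreal (L s) * ennreal (kap \<nu> (t - s) * exp (0 * (t - s))) * d s * ennreal (exp (-lam * t)) \<partial>lborel)"
      unfolding Bop_def by (rule nn_integral_multc[symmetric]) measurable
    also have "\<dots> = Bop \<nu> L (-lam) e t"
      unfolding Bop_def
    proof (intro nn_integral_cong)
      fix s
      show "ennreal (L s) * ennreal (kap \<nu> (t - s) * exp (0 * (t - s))) * d s * ennreal (exp (-lam * t))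
        = ennreal (L s) * ennreal (kap \<nu> (t - s) * exp (-lam * (t - s))) * e s"
      proof (cases "s < t")
        case True
        have "ennreal (kap \<nu> (t - s) * exp (0 * (t - s))) * ennreal (exp (-lam * t)) = ennreal (kap \<nu> (t - s) * exp (-lam * (t - s))) * ennreal (exp (-lam * s))"
        proof -
          have "exp (-lam * t) = exp (-lam * (t - s)) * exp (-lam * s)" by (simp add: exp_add[symmetric] algebra_simps)
          then show ?thesis by (simp add: ennreal_mult[symmetric] kap_nonneg mult_ac)
        qed
        then show ?thesis using True that by (simp add: e_def mult_ac)
      qed (simp add: kap_def)
    qed
    finally show ?thesis .
  qed
  have AE1: "AE t in lborel. e t \<le> Bop \<nu> L (-lam) e t"
    using ineq
  proof eventually_elim
    case (elim t)
    show ?case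
    proof (cases "t < \<tau>")
      case True
      then have "e t = d t * ennreal (exp (-lam * t))" by (simp add: e_def)
      also have "\<dots> \<le> Bop \<nu> L 0 d t * ennreal (exp (-lam * t))" using elim True by (intro mult_right_mono) auto
      also have "\<dots> = Bop \<nu> L (-lam) e t" using eB True by simp
      finally show ?thesis .
    qed (simp add: e_def)
  qed
  have ele: "e t \<le> ennreal (\<xi> t)" for t
  proof (cases "t < 0")
    case True then show ?thesis using dz[of t] by (simp add: e_def)
  next
    case False
    then have "exp (-lam * t) \<le> 1" using lam_pos by simp
    then have "ennreal (exp (-lam * t)) \<le> 1" by (simp add: ennreal_le_1)
    then have "ennreal (exp (-lam * t)) * indicator {..<\<tau>} t \<le> 1"
      by (cases "t < \<tau>") auto
    then have "d t * (ennreal (exp (-lam * t)) * indicator {..<\<tau>} t) \<le> d t * 1"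
      by (rule mult_left_mono) auto
    then have "e t \<le> d t * 1" unfolding e_def by (simp add: mult.assoc)
    then show ?thesis using dle[of t] by simp
  qed
  define N where "N = (\<integral>\<^sup>+t. ennreal (L t) * e t \<partial>lborel)"
  have Nfin: "N < \<infinity>"
  proof -
    have "N \<le> (\<integral>\<^sup>+t. ennreal (L t * \<xi> t) \<partial>lborel)"
      unfolding N_def
    proof (intro nn_integral_mono)
      fix t show "ennreal (L t) * e t \<le> ennreal (L t * \<xi> t)"
        using Lnn[of t] xinn[of t] ele[of t] by (simp add: ennreal_mult mult_left_mono)
    qed
    then show ?thesis using Lxi_finite by (simp add: order.strict_trans1)
  qed
  define G where "G t s = ennreal (L t) * (ennreal (L s) * ennreal (kap \<nu> (t - s) * exp (-lam * (t - s))) * e s)" for t s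
  have Gm[measurable]: "case_prod G \<in> borel_measurable (lborel \<Otimes>\<^sub>M lborel)"
    unfolding G_def by measurable
  have "AE t in lborel. ennreal (L t) * e t \<le> ennreal (L t) * Bop \<nu> L (-lam) e t"
    using AE1 by eventually_elim (rule mult_left_mono, auto)
  then have "N \<le> (\<integral>\<^sup>+t. ennreal (L t) * Bop \<nu> L (-lam) e t \<partial>lborel)"
    unfolding N_def by (rule nn_integral_mono_AE)
  also have "\<dots> = (\<integral>\<^sup>+t. \<integral>\<^sup>+s. G t s \<partial>lborel \<partial>lborel)"
    unfolding Bop_def G_def by (intro nn_integral_cong nn_integral_cmult[symmetric]) measurable
  also have "\<dots> = (\<integral>\<^sup>+s. \<integral>\<^sup>+t. G t s \<partial>lborel \<partial>lborel)"
    by (rule lborel_pair.Fubini'[symmetric]) (rule Gm)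
  also have "\<dots> = (\<integral>\<^sup>+s. (ennreal (L s) * e s) * (\<integral>\<^sup>+t. ennreal (L t) * ennreal (kap \<nu> (t - s) * exp (-lam * (t - s))) \<partial>lborel) \<partial>lborel)"
    unfolding G_def
    by (intro nn_integral_cong, subst nn_integral_cmult[symmetric]) (measurable, intro nn_integral_cong, simp add: mult_ac)
  also have "\<dots> \<le> (\<integral>\<^sup>+s. (ennreal (L s) * e s) * ennreal (1/4) \<partial>lborel)"
  proof (intro nn_integral_mono)
    fix s
    show "(ennreal (L s) * e s) * (\<integral>\<^sup>+t. ennreal (L t) * ennreal (kap \<nu> (t - s) * exp (-lam * (t - s))) \<partial>lborel)
      \<le> (ennreal (L s) * e s) * ennreal (1/4)"
    proof (cases "s < 0")
      case True then show ?thesis using Lz[of s] by simp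
    next
      case False then show ?thesis by (intro mult_left_mono KH1) auto
    qed
  qed
  also have "\<dots> = N * ennreal (1/4)"
    unfolding N_def by (rule nn_integral_multc) measurable
  finally have NN: "N \<le> N * ennreal (1/4)" .
  have N0: "N = 0"
  proof -
    obtain r where r: "N = ennreal r" "r \<ge> 0" using Nfin by (cases N) auto
    have e4: "ennreal r * ennreal (1/4) = ennreal (r/4)" using r by (simp add: ennreal_mult[symmetric])
    have "ennreal r \<le> ennreal (r/4)" by (metis NN r(1) e4)
    then have "r \<le> r/4" using r by (subst (asm) ennreal_le_iff) auto
    then have "r = 0" using r by simp
    then show ?thesis using r by simp
  qed
  then have AEz: "AE s in lborel. ennreal (L s) * e s = 0"
    unfolding N_def by (subst (asm) nn_integral_0_iff_AE) auto
  have Bz: "Bop \<nu> L (-lam) e t = 0" for t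
  proof -
    have "AE s in lborel. ennreal (L s) * ennreal (kap \<nu> (t - s) * exp (-lam * (t - s))) * e s = 0"
      using AEz by eventually_elim (metis mult.assoc mult.commute mult_zero_left)
    then show ?thesis unfolding Bop_def by (subst nn_integral_0_iff_AE) auto
  qed
  show ?thesis
    using AE1
  proof eventually_elim
    case (elim t)
    show ?case
    proof
      assume t: "t < \<tau>"
      have "e t = 0" using elim Bz[of t] by simp
      then show "d t = 0" using t by (simp add: e_def)
    qed
  qed
qed

end


context gron begin

lemma H:
  assumes [measurable]: "d \<in> borel_measurable borel"
    and dz: "\<And>t. t < 0 \<or> t > T \<Longrightarrow> d t = 0"
    and dle: "\<And>t. d t \<le> ennreal (\<xi> t)"
    and ineq: "AE t in lborel. 0 \<le> t \<and> t \<le> T \<longrightarrow> d t \<le> Bop \<nu> L 0 d t + Bop \<nu> L 0 (\<lambda>s. d (s - h)) t"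
  shows "AE t in lborel. 0 \<le> t \<and> t \<le> T \<longrightarrow> d t = 0"
proof -
  have step: "AE t in lborel. t < real j * h \<longrightarrow> d t = 0" for j :: nat
  proof (induction j)
    case 0
    show ?case using dz by (intro AE_I2) (auto simp: hpos)
  next
    case (Suc j)
    have Bz: "Bop \<nu> L 0 (\<lambda>s. d (s - h)) t = 0" if t: "t < real (Suc j) * h" for t
    proof -
      have "Bop \<nu> L 0 (\<lambda>s. d (s - h)) t = (\<integral>\<^sup>+r. ennreal (L (h + 1 * r)) * ennreal (kap \<nu> (t - (h + 1 * r)) * exp (0 * (t - (h + 1 * r)))) * d ((h + 1 * r) - h) \<partial>lborel)"
        unfolding Bop_def
        using nn_integral_real_affine[of "\<lambda>s. ennreal (L s) * ennreal (kap \<nu> (t - s) * exp (0 * (t - s))) * d (s - h)" 1 h]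
        by simp
      also have "\<dots> = 0"
      proof (subst nn_integral_0_iff_AE)
        show "AE r in lborel. ennreal (L (h + 1 * r)) * ennreal (kap \<nu> (t - (h + 1 * r)) * exp (0 * (t - (h + 1 * r)))) * d ((h + 1 * r) - h) = 0"
          using Suc.IH
        proof eventually_elim
          case (elim r)
          show ?case
          proof (cases "r < real j * h")
            case True then show ?thesis using elim by simp
          next
            case False
            then have "t - (h + 1 * r) \<le> 0" using t by (simp add: algebra_simps)
            then show ?thesis by (simp add: kap_def)
          qed
        qed
      qed measurable
      finally show ?thesis .
    qed
    have "AE t in lborel. t < real (Suc j) * h \<longrightarrow> d t \<le> Bop \<nu> L 0 d t"
      using ineq
    proof eventually_elim
      case (elim t)
      show ?case
      proof
        assume t: "t < real (Suc j) * h"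
        show "d t \<le> Bop \<nu> L 0 d t"
        proof (cases "0 \<le> t \<and> t \<le> T")
          case True then show ?thesis using elim Bz[OF t] by simp
        next
          case False then show ?thesis using dz[of t] by auto
        qed
      qed
    qed
    from H0[OF assms(1) dz dle this] show ?case by simp
  qed
  show ?thesis
    using step[of "Suc n"]
  proof eventually_elim
    case (elim t)
    then show ?case using nT(2) by (auto simp: algebra_simps)
  qed
qed

end


lemma Bop_decomp:
  assumes [measurable]: "L \<in> borel_measurable borel" "f0 \<in> borel_measurable borel"
    "\<And>j. F j \<in> borel_measurable borel" "\<And>j. H j \<in> borel_measurable borel"
  shows "Bop \<nu> L \<mu> (\<lambda>s. f0 s + 2 * (\<Sum>j\<in>J. F j s + H j s)) t
    = Bop \<nu> L \<mu> f0 t + 2 * (\<Sum>j\<in>J. Bop \<nu> L \<mu> (F j) t + Bop \<nu> L \<mu> (H j) t)"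
proof -
  have "Bop \<nu> L \<mu> (\<lambda>s. f0 s + 2 * (\<Sum>j\<in>J. F j s + H j s)) t
      = Bop \<nu> L \<mu> f0 t + Bop \<nu> L \<mu> (\<lambda>s. 2 * (\<Sum>j\<in>J. F j s + H j s)) t"
    by (rule Bop_add) measurable
  also have "Bop \<nu> L \<mu> (\<lambda>s. 2 * (\<Sum>j\<in>J. F j s + H j s)) t = 2 * Bop \<nu> L \<mu> (\<lambda>s. \<Sum>j\<in>J. F j s + H j s) t"
    by (rule Bop_cmult) measurable
  also have "Bop \<nu> L \<mu> (\<lambda>s. \<Sum>j\<in>J. F j s + H j s) t = (\<Sum>j\<in>J. Bop \<nu> L \<mu> (\<lambda>s. F j s + H j s) t)"
    by (rule Bop_sum) measurable
  also have "\<dots> = (\<Sum>j\<in>J. Bop \<nu> L \<mu> (F j) t + Bop \<nu> L \<mu> (H j) t)"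
    by (intro sum.cong refl Bop_add) measurable
  finally show ?thesis .
qed

context gron begin

definition "gj j t = Bop \<nu> L lam (\<lambda>s. ennreal (\<theta> s)) (t - real j * h)"
definition "hj j t = Bop \<nu> L lam (\<lambda>s. ennreal (\<theta> (s - h))) (t - real j * h)"
definition "Phi t = (\<Sum>j\<in>{0..n}. gj j t + hj j t)"
definition "GG t = ennreal (\<theta> t) + 2 * Phi t"

lemma gj_m[measurable]: "gj j \<in> borel_measurable borel"
  unfolding gj_def[abs_def] by measurable
lemma hj_m[measurable]: "hj j \<in> borel_measurable borel"
  unfolding hj_def[abs_def] by measurable
lemma GG_m[measurable]: "GG \<in> borel_measurable borel"
  unfolding GG_def[abs_def] Phi_def[abs_def] by measurable

lemma gj_Suc_n: "t \<le> T \<Longrightarrow> gj (Suc n) t = 0"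
  unfolding gj_def
proof (rule Bop_zero)
  fix s assume "t \<le> T" "s < t - real (Suc n) * h"
  then have "s < 0" using nT(2) by (simp add: algebra_simps)
  then show "ennreal (L s) * ennreal (\<theta> s) = 0" using Lz[of s] by simp
qed

lemma hj_ge_n: "t \<le> T \<Longrightarrow> j \<ge> n \<Longrightarrow> hj j t = 0"
  unfolding hj_def
proof (rule Bop_zero)
  fix s assume a: "t \<le> T" "j \<ge> n" "s < t - real j * h"
  have "real n * h \<le> real j * h" using a hpos by (intro mult_right_mono) auto
  then have "s - h < 0" using a nT(2) by (simp add: algebra_simps)
  then show "ennreal (L s) * ennreal (\<theta> (s - h)) = 0" using thz[of "s - h"] by simp
qed

lemma shift_sum_le:
  assumes "t \<le> T"
  shows "(\<Sum>j\<in>{0..n}. gj (Suc j) t + hj (Suc j) t) \<le> Phi t"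
proof -
  let ?F = "\<lambda>j. gj j t + hj j t"
  have "(\<Sum>j\<in>{0..n}. gj (Suc j) t + hj (Suc j) t) \<le> ?F 0 + (\<Sum>j\<in>{0..n}. (?F \<circ> Suc) j)"
    by simp
  also have "\<dots> = (\<Sum>j\<in>{0..Suc n}. ?F j)" by (rule sum.atLeast0_atMost_Suc_shift[symmetric])
  also have "\<dots> = (\<Sum>j\<in>{0..n}. ?F j) + ?F (Suc n)" by (rule sum.atLeast0_atMost_Suc)
  also have "?F (Suc n) = 0" using assms gj_Suc_n hj_ge_n by simp
  finally show ?thesis by (simp add: Phi_def)
qed

lemma super:
  assumes t: "0 \<le> t" "t \<le> T"
  shows "ennreal (\<theta> t) + Bop \<nu> L 0 GG t + Bop \<nu> L 0 (\<lambda>s. GG (s - h)) t \<le> GG t"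
proof -
  have GGf: "GG = (\<lambda>s. ennreal (\<theta> s) + 2 * (\<Sum>j\<in>{0..n}. gj j s + hj j s))"
    by (simp add: GG_def[abs_def] Phi_def)
  have GGh: "(\<lambda>s. GG (s - h)) = (\<lambda>s. ennreal (\<theta> (s - h)) + 2 * (\<Sum>j\<in>{0..n}. gj j (s - h) + hj j (s - h)))"
    by (simp add: GG_def[abs_def] Phi_def)
  have c1: "Bop \<nu> L 0 (gj j) t \<le> ennreal (1/4) * gj j t" for j
  proof -
    have "Bop \<nu> L 0 (gj j) t = Bop \<nu> L 0 (\<lambda>s. Bop \<nu> L lam (\<lambda>s. ennreal (\<theta> s)) (s - real j * h)) t"
      by (simp add: gj_def[abs_def])
    also have "\<dots> \<le> ennreal (1/4) * gj j t" unfolding gj_def using t hpos by (intro comp) auto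
    finally show ?thesis .
  qed
  have c2: "Bop \<nu> L 0 (hj j) t \<le> ennreal (1/4) * hj j t" for j
  proof -
    have "Bop \<nu> L 0 (hj j) t = Bop \<nu> L 0 (\<lambda>s. Bop \<nu> L lam (\<lambda>s. ennreal (\<theta> (s - h))) (s - real j * h)) t"
      by (simp add: hj_def[abs_def])
    also have "\<dots> \<le> ennreal (1/4) * hj j t" unfolding hj_def using t hpos by (intro comp) auto
    finally show ?thesis .
  qed
  have c3: "Bop \<nu> L 0 (\<lambda>s. gj j (s - h)) t \<le> ennreal (1/4) * gj (Suc j) t" for j
  proof -
    have "Bop \<nu> L 0 (\<lambda>s. gj j (s - h)) t = Bop \<nu> L 0 (\<lambda>s. Bop \<nu> L lam (\<lambda>s. ennreal (\<theta> s)) (s - real (Suc j) * h)) t"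
      by (simp add: gj_def algebra_simps)
    also have "\<dots> \<le> ennreal (1/4) * gj (Suc j) t" unfolding gj_def using t hpos by (intro comp) auto
    finally show ?thesis .
  qed
  have c4: "Bop \<nu> L 0 (\<lambda>s. hj j (s - h)) t \<le> ennreal (1/4) * hj (Suc j) t" for j
  proof -
    have "Bop \<nu> L 0 (\<lambda>s. hj j (s - h)) t = Bop \<nu> L 0 (\<lambda>s. Bop \<nu> L lam (\<lambda>s. ennreal (\<theta> (s - h))) (s - real (Suc j) * h)) t"
      by (simp add: hj_def algebra_simps)
    also have "\<dots> \<le> ennreal (1/4) * hj (Suc j) t" unfolding hj_def using t hpos by (intro comp) auto
    finally show ?thesis .
  qed
  have b1: "Bop \<nu> L 0 (\<lambda>s. ennreal (\<theta> s)) t \<le> gj 0 t"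
    unfolding gj_def using lam_pos by (simp add: Bop_mono_mu)
  have b2: "Bop \<nu> L 0 (\<lambda>s. ennreal (\<theta> (s - h))) t \<le> hj 0 t"
    unfolding hj_def using lam_pos by (simp add: Bop_mono_mu)
  have "Bop \<nu> L 0 GG t = Bop \<nu> L 0 (\<lambda>s. ennreal (\<theta> s)) t + 2 * (\<Sum>j\<in>{0..n}. Bop \<nu> L 0 (gj j) t + Bop \<nu> L 0 (hj j) t)"
    unfolding GGf by (rule Bop_decomp) measurable
  also have "\<dots> \<le> gj 0 t + 2 * (\<Sum>j\<in>{0..n}. ennreal (1/4) * gj j t + ennreal (1/4) * hj j t)"
    by (intro add_mono b1 mult_left_mono sum_mono c1 c2) auto
  also have "\<dots> = gj 0 t + 2 * (ennreal (1/4) * Phi t)"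
    by (simp add: Phi_def sum_distrib_left distrib_left)
  finally have e1: "Bop \<nu> L 0 GG t \<le> gj 0 t + 2 * (ennreal (1/4) * Phi t)" .
  have "Bop \<nu> L 0 (\<lambda>s. GG (s - h)) t = Bop \<nu> L 0 (\<lambda>s. ennreal (\<theta> (s - h))) t + 2 * (\<Sum>j\<in>{0..n}. Bop \<nu> L 0 (\<lambda>s. gj j (s - h)) t + Bop \<nu> L 0 (\<lambda>s. hj j (s - h)) t)"
    unfolding GGh by (rule Bop_decomp) measurable
  also have "\<dots> \<le> hj 0 t + 2 * (\<Sum>j\<in>{0..n}. ennreal (1/4) * gj (Suc j) t + ennreal (1/4) * hj (Suc j) t)"
    by (intro add_mono b2 mult_left_mono sum_mono c3 c4) auto
  also have "\<dots> = hj 0 t + 2 * (ennreal (1/4) * (\<Sum>j\<in>{0..n}. gj (Suc j) t + hj (Suc j) t))"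
    by (simp add: sum_distrib_left distrib_left)
  also have "\<dots> \<le> hj 0 t + 2 * (ennreal (1/4) * Phi t)"
    using shift_sum_le[OF t(2)] by (intro add_mono mult_left_mono) auto
  finally have e2: "Bop \<nu> L 0 (\<lambda>s. GG (s - h)) t \<le> hj 0 t + 2 * (ennreal (1/4) * Phi t)" .
  have g0: "gj 0 t + hj 0 t \<le> Phi t"
    unfolding Phi_def by (rule member_le_sum[where i=0, of _ "\<lambda>j. gj j t + hj j t"]) auto
  have q: "2 * (ennreal (1/4) * Phi t) + 2 * (ennreal (1/4) * Phi t) = Phi t"
  proof -
    have "2 * (ennreal (1/4) * Phi t) + 2 * (ennreal (1/4) * Phi t) = (ennreal 2 * ennreal (1/4) + ennreal 2 * ennreal (1/4)) * Phi t"
      by (simp add: distrib_right mult.assoc)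
    also have "ennreal 2 * ennreal (1/4) + ennreal 2 * ennreal (1/4) = 1"
    proof -
      have "ennreal 2 * ennreal (1/4) = ennreal (1/2)" by (subst ennreal_mult[symmetric]) auto
      moreover have "ennreal (1/2) + ennreal (1/2) = ennreal 1" by (subst ennreal_plus[symmetric]) auto
      ultimately show ?thesis by simp
    qed
    finally show ?thesis by simp
  qed
  have "ennreal (\<theta> t) + Bop \<nu> L 0 GG t + Bop \<nu> L 0 (\<lambda>s. GG (s - h)) t
     \<le> ennreal (\<theta> t) + (gj 0 t + 2 * (ennreal (1/4) * Phi t)) + (hj 0 t + 2 * (ennreal (1/4) * Phi t))"
    by (intro add_mono e1 e2 order_refl)
  also have "\<dots> = ennreal (\<theta> t) + (gj 0 t + hj 0 t) + (2 * (ennreal (1/4) * Phi t) + 2 * (ennreal (1/4) * Phi t))"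
    by (simp add: add_ac)
  also have "\<dots> \<le> ennreal (\<theta> t) + Phi t + Phi t"
    unfolding q by (intro add_mono g0 order_refl)
  also have "\<dots> = GG t" by (simp add: GG_def mult_2 add_ac)
  finally show ?thesis .
qed

end


context gron begin

lemma xi_le_GG: "AE t in lborel. 0 \<le> t \<and> t \<le> T \<longrightarrow> ennreal (\<xi> t) \<le> GG t"
proof -
  define d where "d t = ennreal (\<xi> t) - GG t" for t
  have dm[measurable]: "d \<in> borel_measurable borel" unfolding d_def[abs_def] by measurable
  have dz: "d t = 0" if "t < 0 \<or> t > T" for t using xiz[OF that] by (simp add: d_def)
  have dle: "d t \<le> ennreal (\<xi> t)" for t by (simp add: d_def)
  have xGd: "ennreal (\<xi> s) \<le> GG s + d s" for s
    unfolding d_def using ennreal_minus_le_iff[of "ennreal (\<xi> s)" "GG s" "ennreal (\<xi> s) - GG s"] by simp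
  have ineq: "AE t in lborel. 0 \<le> t \<and> t \<le> T \<longrightarrow> d t \<le> Bop \<nu> L 0 d t + Bop \<nu> L 0 (\<lambda>s. d (s - h)) t"
    using hyp
  proof eventually_elim
    case (elim t)
    show ?case
    proof
      assume t: "0 \<le> t \<and> t \<le> T"
      have "Bop \<nu> L 0 (\<lambda>s. ennreal (\<xi> s)) t \<le> Bop \<nu> L 0 (\<lambda>s. GG s + d s) t"
        by (intro Bop_mono xGd)
      also have "\<dots> = Bop \<nu> L 0 GG t + Bop \<nu> L 0 d t" by (rule Bop_add) measurable
      finally have i1: "Bop \<nu> L 0 (\<lambda>s. ennreal (\<xi> s)) t \<le> Bop \<nu> L 0 GG t + Bop \<nu> L 0 d t" .
      have "Bop \<nu> L 0 (\<lambda>s. ennreal (\<xi> (s - h))) t \<le> Bop \<nu> L 0 (\<lambda>s. GG (s - h) + d (s - h)) t"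
        by (intro Bop_mono xGd)
      also have "\<dots> = Bop \<nu> L 0 (\<lambda>s. GG (s - h)) t + Bop \<nu> L 0 (\<lambda>s. d (s - h)) t" by (rule Bop_add) measurable
      finally have i2: "Bop \<nu> L 0 (\<lambda>s. ennreal (\<xi> (s - h))) t \<le> Bop \<nu> L 0 (\<lambda>s. GG (s - h)) t + Bop \<nu> L 0 (\<lambda>s. d (s - h)) t" .
      have "ennreal (\<xi> t) \<le> ennreal (\<theta> t) + (Bop \<nu> L 0 GG t + Bop \<nu> L 0 d t) + (Bop \<nu> L 0 (\<lambda>s. GG (s - h)) t + Bop \<nu> L 0 (\<lambda>s. d (s - h)) t)"
        using elim t i1 i2 by (meson add_mono order_refl order_trans)
      also have "\<dots> = (ennreal (\<theta> t) + Bop \<nu> L 0 GG t + Bop \<nu> L 0 (\<lambda>s. GG (s - h)) t) + (Bop \<nu> L 0 d t + Bop \<nu> L 0 (\<lambda>s. d (s - h)) t)"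
        by (simp add: add_ac)
      also have "\<dots> \<le> GG t + (Bop \<nu> L 0 d t + Bop \<nu> L 0 (\<lambda>s. d (s - h)) t)"
        using super t by (intro add_mono order_refl) auto
      finally show "d t \<le> Bop \<nu> L 0 d t + Bop \<nu> L 0 (\<lambda>s. d (s - h)) t"
        unfolding d_def by (subst ennreal_minus_le_iff) auto
    qed
  qed
  have "AE t in lborel. 0 \<le> t \<and> t \<le> T \<longrightarrow> d t = 0" by (rule H[OF dm dz dle ineq])
  then show ?thesis
    by eventually_elim (auto simp: d_def dest: ennreal_minus_eq_0)
qed

theorem main_clean:
  "\<exists>K>0. AE t in lborel. 0 \<le> t \<and> t \<le> T \<longrightarrow> ennreal (\<xi> t) \<le> ennreal (\<theta> t)
     + ennreal K * (\<Sum>k\<in>{1..n}. Bop \<nu> L 0 (\<lambda>s. ennreal (\<theta> s)) (t - real k * h))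
     + ennreal K * (\<Sum>k\<in>{0..<n}. Bop \<nu> L 0 (\<lambda>s. ennreal (\<theta> (s - h))) (t - real k * h))
     + ennreal K * Bop \<nu> L 0 (\<lambda>s. ennreal (\<theta> s)) t"
proof (intro exI conjI)
  define K where "K = 2 * exp (lam * T)"
  show "K > 0" by (simp add: K_def)
  define A where "A k t = Bop \<nu> L 0 (\<lambda>s. ennreal (\<theta> s)) (t - real k * h)" for k t
  define B where "B k t = Bop \<nu> L 0 (\<lambda>s. ennreal (\<theta> (s - h))) (t - real k * h)" for k t
  have GGle: "GG t \<le> ennreal (\<theta> t) + ennreal K * (\<Sum>k\<in>{1..n}. A k t) + ennreal K * (\<Sum>k\<in>{0..<n}. B k t) + ennreal K * A 0 t"
    if t: "0 \<le> t" "t \<le> T" for t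
  proof -
    have Lz': "\<And>s. s < 0 \<Longrightarrow> L s = 0" using Lz by auto
    have tk: "t - real k * h \<le> T" for k using t hpos by (smt (verit) mult_nonneg_nonneg of_nat_0_le_iff)
    have ga: "gj k t \<le> ennreal (exp (lam * T)) * A k t" for k
      unfolding gj_def A_def using lam_pos tk Lz' by (intro Bop_exp_le) auto
    have hb: "hj k t \<le> ennreal (exp (lam * T)) * B k t" for k
      unfolding hj_def B_def using lam_pos tk Lz' by (intro Bop_exp_le) auto
    have "Phi t \<le> (\<Sum>k\<in>{0..n}. ennreal (exp (lam * T)) * A k t + ennreal (exp (lam * T)) * B k t)"
      unfolding Phi_def by (intro sum_mono add_mono ga hb)
    also have "\<dots> = ennreal (exp (lam * T)) * ((\<Sum>k\<in>{0..n}. A k t) + (\<Sum>k\<in>{0..n}. B k t))"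
      by (simp add: sum.distrib sum_distrib_left distrib_left)
    also have "(\<Sum>k\<in>{0..n}. A k t) = A 0 t + (\<Sum>k\<in>{1..n}. A k t)"
      by (subst sum.atLeast_Suc_atMost) auto
    also have "(\<Sum>k\<in>{0..n}. B k t) = (\<Sum>k\<in>{0..<n}. B k t) + B n t"
      by (simp add: atLeastLessThanSuc_atLeastAtMost[symmetric])
    also have "B n t = 0" using hj_ge_n[OF t(2), of n]
    proof -
      have "B n t = Bop \<nu> L 0 (\<lambda>s. ennreal (\<theta> (s - h))) (t - real n * h)" by (simp add: B_def)
      also have "\<dots> = 0"
      proof (rule Bop_zero)
        fix s assume "s < t - real n * h"
        then have "s - h < 0" using t nT(2) by (simp add: algebra_simps)
        then show "ennreal (L s) * ennreal (\<theta> (s - h)) = 0" using thz[of "s - h"] by simp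
      qed
      finally show ?thesis .
    qed
    finally have P: "Phi t \<le> ennreal (exp (lam * T)) * (A 0 t + (\<Sum>k\<in>{1..n}. A k t) + (\<Sum>k\<in>{0..<n}. B k t))"
      by simp
    have "GG t \<le> ennreal (\<theta> t) + 2 * (ennreal (exp (lam * T)) * (A 0 t + (\<Sum>k\<in>{1..n}. A k t) + (\<Sum>k\<in>{0..<n}. B k t)))"
      unfolding GG_def using P by (intro add_mono mult_left_mono order_refl) auto
    also have "2 * (ennreal (exp (lam * T)) * (A 0 t + (\<Sum>k\<in>{1..n}. A k t) + (\<Sum>k\<in>{0..<n}. B k t)))
       = ennreal K * (A 0 t + (\<Sum>k\<in>{1..n}. A k t) + (\<Sum>k\<in>{0..<n}. B k t))"
      by (simp add: K_def ennreal_mult mult.assoc)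
    finally show ?thesis by (simp add: distrib_left add_ac)
  qed
  show "AE t in lborel. 0 \<le> t \<and> t \<le> T \<longrightarrow> ennreal (\<xi> t) \<le> ennreal (\<theta> t)
     + ennreal K * (\<Sum>k\<in>{1..n}. Bop \<nu> L 0 (\<lambda>s. ennreal (\<theta> s)) (t - real k * h))
     + ennreal K * (\<Sum>k\<in>{0..<n}. Bop \<nu> L 0 (\<lambda>s. ennreal (\<theta> (s - h))) (t - real k * h))
     + ennreal K * Bop \<nu> L 0 (\<lambda>s. ennreal (\<theta> s)) t"
    using xi_le_GG
  proof eventually_elim
    case (elim t)
    show ?case
    proof
      assume t: "0 \<le> t \<and> t \<le> T"
      then have "ennreal (\<xi> t) \<le> GG t" using elim by auto
      also have "\<dots> \<le> ennreal (\<theta> t) + ennreal K * (\<Sum>k\<in>{1..n}. A k t) + ennreal K * (\<Sum>k\<in>{0..<n}. B k t) + ennreal K * A 0 t"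
        using GGle t by auto
      finally show "ennreal (\<xi> t) \<le> ennreal (\<theta> t)
     + ennreal K * (\<Sum>k\<in>{1..n}. Bop \<nu> L 0 (\<lambda>s. ennreal (\<theta> s)) (t - real k * h))
     + ennreal K * (\<Sum>k\<in>{0..<n}. Bop \<nu> L 0 (\<lambda>s. ennreal (\<theta> (s - h))) (t - real k * h))
     + ennreal K * Bop \<nu> L 0 (\<lambda>s. ennreal (\<theta> s)) t"
        by (simp add: A_def B_def)
    qed
  qed
qed

end


lemma sing_eq_Bop:
  fixes L L' f f' :: "real \<Rightarrow> real"
  assumes t: "0 \<le> t" and Ln: "\<And>s. 0 \<le> L s" and fn: "\<And>s. 0 \<le> f s"
    and L'z: "\<And>s. s < 0 \<Longrightarrow> L' s = 0"
    and eq: "\<And>s. 0 < s \<Longrightarrow> s < t \<Longrightarrow> L' s = L s \<and> f' s = f s"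
  shows "sing_int \<nu> 0 t t (\<lambda>s. L s * f s) = Bop \<nu> L' 0 (\<lambda>s. ennreal (f' s)) t"
  unfolding sing_int_def Bop_def
proof (rule nn_integral_cong_AE)
  show "AE s in lborel. ennreal (L s * f s / (t - s) powr (1 - \<nu>)) * indicator {0..t} s =
      ennreal (L' s) * ennreal (kap \<nu> (t - s) * exp (0 * (t - s))) * ennreal (f' s)"
    using AE_lborel_singleton[of 0]
  proof eventually_elim
    case (elim s)
    show ?case
    proof (cases "0 < s \<and> s < t")
      case True
      then have "L' s = L s" "f' s = f s" using eq by auto
      moreover have "kap \<nu> (t - s) = inverse ((t - s) powr (1 - \<nu>))"
        using True by (simp add: kap_def powr_minus[symmetric])
      ultimately show ?thesis using True Ln[of s] fn[of s]
        by (simp add: ennreal_mult[symmetric] divide_inverse mult_ac)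
    next
      case False
      then consider "s < 0" | "s = t" | "s > t" using elim by fastforce
      then show ?thesis
      proof cases
        case 1 then show ?thesis using L'z by simp
      next
        case 2 then show ?thesis by (simp add: kap_def)
      next
        case 3 then show ?thesis by (simp add: kap_def)
      qed
    qed
  qed
qed

lemma Bop_le_sing:
  fixes L L' f f' :: "real \<Rightarrow> real"
  assumes Ln: "\<And>s. 0 \<le> L s" and fn: "\<And>s. 0 \<le> f s" and L'n: "\<And>s. 0 \<le> L' s" and f'n: "\<And>s. 0 \<le> f' s"
    and L'le: "\<And>s. L' s \<le> L s" and f'le: "\<And>s. f' s \<le> f s"
    and z: "\<And>s. s < c \<Longrightarrow> L' s * f' s = 0"
  shows "Bop \<nu> L' 0 (\<lambda>s. ennreal (f' s)) x \<le> sing_int \<nu> c x x (\<lambda>s. L s * f s)"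
  unfolding sing_int_def Bop_def
proof (rule nn_integral_mono)
  fix s
  show "ennreal (L' s) * ennreal (kap \<nu> (x - s) * exp (0 * (x - s))) * ennreal (f' s)
     \<le> ennreal (L s * f s / (x - s) powr (1 - \<nu>)) * indicator {c..x} s"
  proof (cases "c \<le> s \<and> s < x")
    case True
    have k: "kap \<nu> (x - s) = inverse ((x - s) powr (1 - \<nu>))"
      using True by (simp add: kap_def powr_minus[symmetric])
    have "L' s * kap \<nu> (x - s) * f' s \<le> L s * kap \<nu> (x - s) * f' s"
      using L'le f'n by (intro mult_right_mono) (auto simp: kap_nonneg)
    also have "\<dots> \<le> L s * kap \<nu> (x - s) * f s"
      using f'le Ln by (intro mult_left_mono) (auto simp: kap_nonneg)
    finally have "L' s * kap \<nu> (x - s) * f' s \<le> L s * f s / (x - s) powr (1 - \<nu>)"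
      by (simp add: k divide_inverse mult_ac)
    then show ?thesis using True L'n[of s] f'n[of s]
      by (simp add: ennreal_mult[symmetric] kap_nonneg ennreal_leI)
  next
    case False
    then consider "s < c" | "s \<ge> x" by fastforce
    then show ?thesis
    proof cases
      case 1
      then have "L' s * f' s = 0" by (rule z)
      then have "ennreal (L' s) * ennreal (f' s) = 0" using L'n[of s] f'n[of s] by (simp add: ennreal_mult[symmetric])
      then show ?thesis by (metis mult.commute mult.left_commute mult_zero_left zero_le)
    next
      case 2 then show ?thesis by (simp add: kap_def)
    qed
  qed
qed

theorem theorem3p1:
  fixes \<nu> h T q :: real and n :: nat and L \<theta> \<xi> :: "real \<Rightarrow> real"
  assumes "0 < \<nu>" "\<nu> < 1" "0 < h" "0 < T" "q > 1 / \<nu>"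
    and "real n * h \<le> T" "T < (real n + 1) * h"
    and "\<And>t. L t \<ge> 0" "\<And>t. \<theta> t \<ge> 0" "\<And>t. \<xi> t \<ge> 0"
    and "\<And>t. t < 0 \<Longrightarrow> \<theta> t = 0" "\<And>t. t < 0 \<Longrightarrow> L t = 0"
    and "set_borel_measurable lborel {0<..<T} L"
    and "(\<integral>\<^sup>+ t\<in>{0<..<T}. ennreal (L t powr q) \<partial>lborel) < \<infinity>"
    and "set_borel_measurable lborel {-h..<T} \<theta>"
    and "(\<integral>\<^sup>+ t\<in>{-h..<T}. ennreal (\<theta> t powr (q / (q - 1))) \<partial>lborel) < \<infinity>"
    and "set_borel_measurable lborel {-h..<T} \<xi>"
    and "(\<integral>\<^sup>+ t\<in>{-h..<T}. ennreal (\<xi> t powr (q / (q - 1))) \<partial>lborel) < \<infinity>"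
    and "AE t in lborel. t \<in> {0..T} \<longrightarrow>
           ennreal (\<xi> t) \<le> ennreal (\<theta> t)
             + sing_int \<nu> 0 t t (\<lambda>s. L s * \<xi> s)
             + sing_int \<nu> 0 t t (\<lambda>s. L s * \<xi> (s - h))"
    and "\<And>t. t < 0 \<Longrightarrow> \<xi> t = 0"
  shows "\<exists>K>0. AE t in lborel. t \<in> {0..T} \<longrightarrow>
           ennreal (\<xi> t) \<le> theta_n \<nu> h n K L \<theta> t + ennreal K * sing_int \<nu> 0 t t (\<lambda>s. L s * \<theta> s)"
proof -
  note a = assms
  define L' where "L' t = indicator {0<..<T} t * L t" for t
  define th' where "th' t = indicator {-h..<T} t * \<theta> t" for t
  define xi' where "xi' t = indicator {-h..<T} t * \<xi> t" for t
  have L'm: "L' \<in> borel_measurable borel"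
    using a(13) unfolding set_borel_measurable_def L'_def[abs_def] by simp
  have th'm: "th' \<in> borel_measurable borel"
    using a(15) unfolding set_borel_measurable_def th'_def[abs_def] by simp
  have xi'm: "xi' \<in> borel_measurable borel"
    using a(17) unfolding set_borel_measurable_def xi'_def[abs_def] by simp
  have L'n: "\<And>t. L' t \<ge> 0" using a(8) by (simp add: L'_def)
  have th'n: "\<And>t. th' t \<ge> 0" using a(9) by (simp add: th'_def)
  have xi'n: "\<And>t. xi' t \<ge> 0" using a(10) by (simp add: xi'_def)
  have L'z: "\<And>t. t < 0 \<or> t > T \<Longrightarrow> L' t = 0" by (auto simp: L'_def)
  have th'z: "\<And>t. t < 0 \<or> t > T \<Longrightarrow> th' t = 0" using a(11) by (auto simp: th'_def)
  have xi'z: "\<And>t. t < 0 \<or> t > T \<Longrightarrow> xi' t = 0" using a(20) by (auto simp: xi'_def)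
  have p0: "q/(q-1) > 0"
  proof -
    have "1/\<nu> > 1" using a(1,2) by simp
    then have "q > 1" using a(5) by linarith
    then show ?thesis by simp
  qed
  have L'q: "(\<integral>\<^sup>+t. ennreal (L' t powr q) \<partial>lborel) < \<infinity>"
  proof -
    have "(\<integral>\<^sup>+t. ennreal (L' t powr q) \<partial>lborel) = (\<integral>\<^sup>+ t\<in>{0<..<T}. ennreal (L t powr q) \<partial>lborel)"
      by (intro nn_integral_cong) (auto simp: L'_def indicator_def)
    then show ?thesis using a(14) by simp
  qed
  have xi'p: "(\<integral>\<^sup>+t. ennreal (xi' t powr (q/(q-1))) \<partial>lborel) < \<infinity>"
  proof -
    have "(\<integral>\<^sup>+t. ennreal (xi' t powr (q/(q-1))) \<partial>lborel) = (\<integral>\<^sup>+ t\<in>{-h..<T}. ennreal (\<xi> t powr (q/(q-1))) \<partial>lborel)"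
      by (intro nn_integral_cong) (auto simp: xi'_def indicator_def)
    then show ?thesis using a(18) by simp
  qed
  have hyp': "AE t in lborel. 0 \<le> t \<and> t \<le> T \<longrightarrow> ennreal (xi' t) \<le> ennreal (th' t)
        + Bop \<nu> L' 0 (\<lambda>s. ennreal (xi' s)) t + Bop \<nu> L' 0 (\<lambda>s. ennreal (xi' (s-h))) t"
    using a(19) AE_lborel_singleton[of T]
  proof eventually_elim
    case (elim t)
    show ?case
    proof
      assume t: "0 \<le> t \<and> t \<le> T"
      then have tT: "t < T" using elim by auto
      have e1: "sing_int \<nu> 0 t t (\<lambda>s. L s * \<xi> s) = Bop \<nu> L' 0 (\<lambda>s. ennreal (xi' s)) t"
        using t tT a(8,10) a(3) by (intro sing_eq_Bop) (auto simp: L'_def xi'_def)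
      have e2: "sing_int \<nu> 0 t t (\<lambda>s. L s * \<xi> (s - h)) = Bop \<nu> L' 0 (\<lambda>s. ennreal (xi' (s - h))) t"
        using t tT a(8,10) a(3) by (intro sing_eq_Bop) (auto simp: L'_def xi'_def)
      have "xi' t = \<xi> t" "th' t = \<theta> t" using t tT a(3) by (auto simp: xi'_def th'_def)
      then show "ennreal (xi' t) \<le> ennreal (th' t) + Bop \<nu> L' 0 (\<lambda>s. ennreal (xi' s)) t + Bop \<nu> L' 0 (\<lambda>s. ennreal (xi' (s-h))) t"
        using elim t e1 e2 by simp
    qed
  qed
  interpret G: gron \<nu> h T q n L' th' xi'
    by unfold_locales (use a(1-7) L'n th'n xi'n L'z th'z xi'z L'm th'm xi'm L'q xi'p hyp' in auto)
  obtain K where K: "K > 0" and KA: "AE t in lborel. 0 \<le> t \<and> t \<le> T \<longrightarrow> ennreal (xi' t) \<le> ennreal (th' t)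
     + ennreal K * (\<Sum>k\<in>{1..n}. Bop \<nu> L' 0 (\<lambda>s. ennreal (th' s)) (t - real k * h))
     + ennreal K * (\<Sum>k\<in>{0..<n}. Bop \<nu> L' 0 (\<lambda>s. ennreal (th' (s - h))) (t - real k * h))
     + ennreal K * Bop \<nu> L' 0 (\<lambda>s. ennreal (th' s)) t"
    using G.main_clean by blast
  have L'le: "\<And>s. L' s \<le> L s" using a(8) by (simp add: L'_def indicator_def)
  have th'le: "\<And>s. th' s \<le> \<theta> s" using a(9) by (simp add: th'_def indicator_def)
  have B1: "Bop \<nu> L' 0 (\<lambda>s. ennreal (th' s)) x \<le> sing_int \<nu> 0 x x (\<lambda>s. L s * \<theta> s)" for x
    using a(8,9) L'n th'n L'le th'le L'z by (intro Bop_le_sing) auto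
  have B2: "Bop \<nu> L' 0 (\<lambda>s. ennreal (th' (s - h))) x \<le> sing_int \<nu> h x x (\<lambda>s. L s * \<theta> (s - h))" for x
    using a(8,9) L'n th'n L'le th'le th'z by (intro Bop_le_sing) auto
  show ?thesis
  proof (intro exI conjI)
    show "K > 0" by (rule K)
    show "AE t in lborel. t \<in> {0..T} \<longrightarrow>
           ennreal (\<xi> t) \<le> theta_n \<nu> h n K L \<theta> t + ennreal K * sing_int \<nu> 0 t t (\<lambda>s. L s * \<theta> s)"
      using KA AE_lborel_singleton[of T]
    proof eventually_elim
      case (elim t)
      show ?case
      proof
        assume t: "t \<in> {0..T}"
        then have tT: "t < T" using elim by auto
        have "xi' t = \<xi> t" using t tT a(3) by (auto simp: xi'_def)
        then have "ennreal (\<xi> t) \<le> ennreal (th' t)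
           + ennreal K * (\<Sum>k\<in>{1..n}. Bop \<nu> L' 0 (\<lambda>s. ennreal (th' s)) (t - real k * h))
           + ennreal K * (\<Sum>k\<in>{0..<n}. Bop \<nu> L' 0 (\<lambda>s. ennreal (th' (s - h))) (t - real k * h))
           + ennreal K * Bop \<nu> L' 0 (\<lambda>s. ennreal (th' s)) t"
          using elim t by auto
        also have "\<dots> \<le> ennreal (\<theta> t)
           + ennreal K * (\<Sum>k\<in>{1..n}. sing_int \<nu> 0 (t - real k * h) (t - real k * h) (\<lambda>s. L s * \<theta> s))
           + ennreal K * (\<Sum>k\<in>{0..<n}. sing_int \<nu> h (t - real k * h) (t - real k * h) (\<lambda>s. L s * \<theta> (s - h)))
           + ennreal K * sing_int \<nu> 0 t t (\<lambda>s. L s * \<theta> s)"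
          by (intro add_mono mult_left_mono sum_mono B1 B2 ennreal_leI th'le order_refl) auto
        also have "\<dots> = theta_n \<nu> h n K L \<theta> t + ennreal K * sing_int \<nu> 0 t t (\<lambda>s. L s * \<theta> s)"
          by (simp add: theta_n_def)
        finally show "ennreal (\<xi> t) \<le> theta_n \<nu> h n K L \<theta> t + ennreal K * sing_int \<nu> 0 t t (\<lambda>s. L s * \<theta> s)" .
      qed
    qed
  qed
qed

end
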